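(* Assume the stent geometry satisfies: whenever real numbers $\alpha_i$, indexed by the straight edges $i$, satisfy \[ \sum_{i\in J_j^+,\ i\text{ straight}}\alpha_i t^i-\sum_{i\in J_j^-,\ i\text{ straight}}\alpha_i t^i=0\quad\text{for all } j=1,\dots,n_{\mathcal V}, \] then $\alpha_i=0$ for all straight edges $i$. Then the bilinear form $a$ is $\operatorname{Ker}B$-elliptic: there exists $c_a>0$ with $a(\Sigma,\Sigma)\ge c_a\|\Sigma\|_V^2$ for all $\Sigma\in\operatorname{Ker}B:=\{\Sigma\in V:\ b(\Sigma,\psi)=0\ \text{for all }\psi\in M\}$.
   Context: Network: a stent is modelled by a finite connected graph with vertices $j=1,\dots,n_{\mathcal V}$ located at points $\mathcal V_j\in\mathbb{R}^3$ and oriented edges $i=1,\dots,n_{\mathcal E}$. $J_j^-$ ($J_j^+$) is the set of edges leaving (entering) vertex $j$. Edge $i$ is a curve of length $\ell^i>0$ with arc-length parametrization $\Phi^i:[0,\ell^i]\to\mathbb{R}^3$ (smooth), $\Phi^i(0)$ the position of the vertex it leaves, $\Phi^i(\ell^i)$ the position of the vertex it enters; $t^i=(\Phi^i)'$. Edge $i$ is called straight if $t^i$ is constant. $Q^i:[0,\ell^i]\to\mathbb{R}^{3\times 3}$ is continuous with orthogonal values and $H^i\in\mathbb{R}^{3\times3}$ is positive definite diagonal. Matrices: $A^+_{I}\in\mathbb{R}^{3n_{\mathcal V}\times 3n_{\mathcal E}}$ has $3\times3$ block $I_3$ in block row $j$, block column $i$ if $i\in J_j^+$ and $0$ otherwise;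 $A^-_I$ likewise with $J_j^-$. Spaces: $L^2(\mathcal N;\mathbb{R}^3)=\prod_iL^2(0,\ell^i;\mathbb{R}^3)$, $L^2_{H^1}(\mathcal N;\mathbb{R}^3)=\prod_iH^1(0,\ell^i;\mathbb{R}^3)$ (no continuity at vertices), product norms; $\int_{\mathcal N}v=\sum_i\int_0^{\ell^i}v^i\,ds$. $V=L^2(\mathcal N;\mathbb{R}^3)^2\times(\mathbb{R}^{3n_{\mathcal E}})^4\times\mathbb{R}^3\times\mathbb{R}^3$ with elements $\Sigma=(q,p,P_+,P_-,Q_+,Q_-,\alpha,\beta)$ (and $\Gamma=(\xi,\theta,\dots)$), $M=L^2_{H^1}(\mathcal N;\mathbb{R}^3)^2\times\mathbb{R}^{3n_{\mathcal V}}\times\mathbb{R}^{3n_{\mathcal V}}$ with elements $\psi=(v,w,V,W)$, both with product Hilbert norms. $a(\Sigma,\Gamma)=\sum_i\int_0^{\ell^i}Q^i(H^i)^{-1}(Q^i)^Tq^i\cdot\xi^i\,ds$; $b(\Sigma,\psi)=\sum_i\int_0^{\ell^i}\big(-p^i\cdot(\partial_sv^i+t^i\times w^i)-q^i\cdot\partial_sw^i\big)ds+\sum_i\big(P^i_+\cdot v^i(\ell^i)-P^i_-\cdot v^i(0)\big)+\sum_i\big(Q^i_+\cdot w^i(\ell^i)-Q^i_-\cdot w^i(0)\big)-(A^+_IP_+-A^-_IP_-)\cdot V-(A^+_IQ_+-A^-_IQ_-)\cdot W+\alpha\cdot\int_{\mathcal N}v+\beta\cdot\int_{\mathcal N}w$.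 *)

theory Defs
  imports "HOL-Analysis.Analysis" "HOL-Analysis.Cross3"
begin

text \<open>Vertices are 0..<nV, edges are 0..<nE. Edge i leaves vertex src i and enters vertex tgt i,
  so J_j^- = {i. src i = j} and J_j^+ = {i. tgt i = j}. Edge i is parametrised on [0, ell i].\<close>

definition graph_connected :: "nat \<Rightarrow> nat \<Rightarrow> (nat \<Rightarrow> nat) \<Rightarrow> (nat \<Rightarrow> nat) \<Rightarrow> bool" where
  "graph_connected nV nE src tgt \<longleftrightarrow>
     (let E = {(src i, tgt i) | i. i < nE} in
      \<forall>j<nV. \<forall>k<nV. (j, k) \<in> (E \<union> E\<inverse>)\<^sup>*)"

definition smooth_on_interval :: "real \<Rightarrow> (real \<Rightarrow> real^3) \<Rightarrow> bool" where
  "smooth_on_interval l f \<longleftrightarrow>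
     (\<exists>D :: nat \<Rightarrow> real \<Rightarrow> real^3. D 0 = f \<and>
        (\<forall>k. \<forall>s\<in>{0..l}. (D k has_vector_derivative D (Suc k) s) (at s within {0..l})))"

definition tangent :: "(real \<Rightarrow> real^3) \<Rightarrow> real \<Rightarrow> real \<Rightarrow> real^3" where
  "tangent f l s = vector_derivative f (at s within {0..l})"

definition straight_edge :: "(nat \<Rightarrow> real) \<Rightarrow> (nat \<Rightarrow> real \<Rightarrow> real^3) \<Rightarrow> nat \<Rightarrow> bool" where
  "straight_edge ell Phi i \<longleftrightarrow> (\<exists>c. \<forall>s\<in>{0..ell i}. tangent (Phi i) (ell i) s = c)"

definition pos_diag :: "real^3^3 \<Rightarrow> bool" where
  "pos_diag H \<longleftrightarrow> (\<forall>a b. a \<noteq> b \<longrightarrow> H $ a $ b = 0) \<and> (\<forall>a. H $ a $ a > 0)"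

definition stent_geometry ::
  "nat \<Rightarrow> nat \<Rightarrow> (nat \<Rightarrow> nat) \<Rightarrow> (nat \<Rightarrow> nat) \<Rightarrow> (nat \<Rightarrow> real^3) \<Rightarrow> (nat \<Rightarrow> real)
   \<Rightarrow> (nat \<Rightarrow> real \<Rightarrow> real^3) \<Rightarrow> (nat \<Rightarrow> real \<Rightarrow> real^3^3) \<Rightarrow> (nat \<Rightarrow> real^3^3) \<Rightarrow> bool" where
  "stent_geometry nV nE src tgt Vpos ell Phi Q H \<longleftrightarrow>
     0 < nE \<and> (\<forall>i<nE. src i < nV \<and> tgt i < nV) \<and> graph_connected nV nE src tgt \<and>
     (\<forall>i<nE. 0 < ell i \<and> smooth_on_interval (ell i) (Phi i) \<and>
        (\<forall>s\<in>{0..ell i}. norm (tangent (Phi i) (ell i) s) = 1) \<and>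
        Phi i 0 = Vpos (src i) \<and> Phi i (ell i) = Vpos (tgt i) \<and>
        continuous_on {0..ell i} (Q i) \<and> (\<forall>s\<in>{0..ell i}. orthogonal_matrix (Q i s)) \<and>
        pos_diag (H i))"

text \<open>L^2(0,l;R^3) (representatives) and H^1(0,l;R^3) given by the absolutely continuous
  representative v together with its weak derivative dv.\<close>
definition L2_on :: "real \<Rightarrow> (real \<Rightarrow> real^3) \<Rightarrow> bool" where
  "L2_on l f \<longleftrightarrow> f measurable_on {0..l} \<and> (\<lambda>s. norm (f s) ^ 2) integrable_on {0..l}"

definition H1_on :: "real \<Rightarrow> (real \<Rightarrow> real^3) \<Rightarrow> (real \<Rightarrow> real^3) \<Rightarrow> bool" where
  "H1_on l v dv \<longleftrightarrow> L2_on l dv \<and> (\<forall>s\<in>{0..l}. v s = v 0 + integral {0..s} dv)"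

definition Aplus :: "nat \<Rightarrow> (nat \<Rightarrow> nat) \<Rightarrow> (nat \<Rightarrow> real^3) \<Rightarrow> nat \<Rightarrow> real^3" where
  "Aplus nE tgt P j = (\<Sum>i | i < nE \<and> tgt i = j. P i)"

definition Aminus :: "nat \<Rightarrow> (nat \<Rightarrow> nat) \<Rightarrow> (nat \<Rightarrow> real^3) \<Rightarrow> nat \<Rightarrow> real^3" where
  "Aminus nE src P j = (\<Sum>i | i < nE \<and> src i = j. P i)"

definition a_form ::
  "nat \<Rightarrow> (nat \<Rightarrow> real) \<Rightarrow> (nat \<Rightarrow> real \<Rightarrow> real^3^3) \<Rightarrow> (nat \<Rightarrow> real^3^3)
   \<Rightarrow> (nat \<Rightarrow> real \<Rightarrow> real^3) \<Rightarrow> (nat \<Rightarrow> real \<Rightarrow> real^3) \<Rightarrow> real" where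
  "a_form nE ell Q H q \<xi> =
     (\<Sum>i<nE. integral {0..ell i}
        (\<lambda>s. ((Q i s ** matrix_inv (H i) ** transpose (Q i s)) *v q i s) \<bullet> \<xi> i s))"

text \<open>b(Sigma, psi) with Sigma = (q,p,Pp,Pm,Qp,Qm,alpha,beta), psi = (v,w,V,W); dv, dw are the
  derivatives of v, w.\<close>
definition b_form ::
  "nat \<Rightarrow> nat \<Rightarrow> (nat \<Rightarrow> nat) \<Rightarrow> (nat \<Rightarrow> nat) \<Rightarrow> (nat \<Rightarrow> real) \<Rightarrow> (nat \<Rightarrow> real \<Rightarrow> real^3)
   \<Rightarrow> (nat \<Rightarrow> real \<Rightarrow> real^3) \<Rightarrow> (nat \<Rightarrow> real \<Rightarrow> real^3)
   \<Rightarrow> (nat \<Rightarrow> real^3) \<Rightarrow> (nat \<Rightarrow> real^3) \<Rightarrow> (nat \<Rightarrow> real^3) \<Rightarrow> (nat \<Rightarrow> real^3) \<Rightarrow> real^3 \<Rightarrow> real^3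
   \<Rightarrow> (nat \<Rightarrow> real \<Rightarrow> real^3) \<Rightarrow> (nat \<Rightarrow> real \<Rightarrow> real^3) \<Rightarrow> (nat \<Rightarrow> real \<Rightarrow> real^3) \<Rightarrow> (nat \<Rightarrow> real \<Rightarrow> real^3)
   \<Rightarrow> (nat \<Rightarrow> real^3) \<Rightarrow> (nat \<Rightarrow> real^3) \<Rightarrow> real" where
  "b_form nV nE src tgt ell Phi q p Pp Pm Qp Qm \<alpha> \<beta> v dv w dw V W =
     (\<Sum>i<nE. integral {0..ell i}
        (\<lambda>s. - (p i s \<bullet> (dv i s + cross3 (tangent (Phi i) (ell i) s) (w i s))) - q i s \<bullet> dw i s))
     + (\<Sum>i<nE. Pp i \<bullet> v i (ell i) - Pm i \<bullet> v i 0)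
     + (\<Sum>i<nE. Qp i \<bullet> w i (ell i) - Qm i \<bullet> w i 0)
     - (\<Sum>j<nV. (Aplus nE tgt Pp j - Aminus nE src Pm j) \<bullet> V j)
     - (\<Sum>j<nV. (Aplus nE tgt Qp j - Aminus nE src Qm j) \<bullet> W j)
     + \<alpha> \<bullet> (\<Sum>i<nE. integral {0..ell i} (v i))
     + \<beta> \<bullet> (\<Sum>i<nE. integral {0..ell i} (w i))"

definition normV_sq ::
  "nat \<Rightarrow> (nat \<Rightarrow> real) \<Rightarrow> (nat \<Rightarrow> real \<Rightarrow> real^3) \<Rightarrow> (nat \<Rightarrow> real \<Rightarrow> real^3)
   \<Rightarrow> (nat \<Rightarrow> real^3) \<Rightarrow> (nat \<Rightarrow> real^3) \<Rightarrow> (nat \<Rightarrow> real^3) \<Rightarrow> (nat \<Rightarrow> real^3) \<Rightarrow> real^3 \<Rightarrow> real^3 \<Rightarrow> real" where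
  "normV_sq nE ell q p Pp Pm Qp Qm \<alpha> \<beta> =
     (\<Sum>i<nE. integral {0..ell i} (\<lambda>s. norm (q i s) ^ 2) + integral {0..ell i} (\<lambda>s. norm (p i s) ^ 2)
        + norm (Pp i) ^ 2 + norm (Pm i) ^ 2 + norm (Qp i) ^ 2 + norm (Qm i) ^ 2)
     + norm \<alpha> ^ 2 + norm \<beta> ^ 2"

end

theory Submission
  imports Defs "HOL-Library.Function_Algebras"
begin

lemma Icc_leb: "{a..b::real} \<in> sets lebesgue"
  by simp

lemma meas_bound_int:
  fixes f :: "real \<Rightarrow> 'b::euclidean_space"
  assumes "f measurable_on {a..b}" "g integrable_on {a..b}" "\<And>x. x\<in>{a..b} \<Longrightarrow> norm (f x) \<le> g x"
  shows "f integrable_on {a..b}"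
  using measurable_bounded_by_integrable_imp_integrable[of f "{a..b}" g] assms
    measurable_on_iff_borel_measurable[OF Icc_leb] by auto

lemma cont_meas:
  fixes f :: "real \<Rightarrow> 'b::euclidean_space"
  shows "continuous_on {a..b} f \<Longrightarrow> f measurable_on {a..b}"
  using continuous_imp_measurable_on_sets_lebesgue[OF _ Icc_leb] measurable_on_iff_borel_measurable[OF Icc_leb]
  by blast

lemma int_meas:
  fixes f :: "real \<Rightarrow> 'b::euclidean_space"
  shows "f integrable_on {a..b} \<Longrightarrow> f measurable_on {a..b}"
  using integrable_imp_measurable measurable_on_iff_borel_measurable[OF Icc_leb] by blast

lemma normsq_meas:
  fixes f :: "real \<Rightarrow> 'b::euclidean_space"
  assumes "f measurable_on S"
  shows "(\<lambda>x. norm (f x) ^ 2) measurable_on S"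
proof -
  have "((\<lambda>y. norm y ^ 2) \<circ> f) measurable_on S"
    by (rule measurable_on_compose_continuous_0[OF assms]) (auto intro!: continuous_intros)
  then show ?thesis by (simp add: comp_def)
qed

lemma L2I:
  fixes h :: "real \<Rightarrow> real^3"
  assumes "h measurable_on {0..l}" "G integrable_on {0..l}" "\<And>x. x \<in> {0..l} \<Longrightarrow> norm (h x) ^ 2 \<le> G x"
  shows "L2_on l h"
  unfolding L2_on_def
proof (intro conjI assms)
  show "(\<lambda>s. norm (h s) ^ 2) integrable_on {0..l}"
    by (rule meas_bound_int[OF normsq_meas[OF assms(1)] assms(2)]) (use assms(3) in auto)
qed

lemma L2_integrable:
  assumes "L2_on l f" shows "f integrable_on {0..l}"
proof (rule meas_bound_int)
  show "f measurable_on {0..l}" using assms L2_on_def by auto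
  show "(\<lambda>x. (1 + norm (f x) ^ 2) / 2) integrable_on {0..l}"
    using assms unfolding L2_on_def by (intro integrable_on_divide integrable_add) auto
  fix x
  have "0 \<le> (norm (f x) - 1)^2" by simp
  then show "norm (f x) \<le> (1 + norm (f x) ^ 2) / 2" by (simp add: power2_eq_square algebra_simps)
qed

lemma L2_sq_integrable: "L2_on l f \<Longrightarrow> (\<lambda>s. norm (f s) ^ 2) integrable_on {0..l}"
  by (simp add: L2_on_def)

lemma L2_meas: "L2_on l f \<Longrightarrow> f measurable_on {0..l}"
  by (simp add: L2_on_def)

lemma inner_meas:
  fixes f g :: "real \<Rightarrow> real^3"
  assumes "f measurable_on S" "g measurable_on S"
  shows "(\<lambda>s. f s \<bullet> g s) measurable_on S"
  by (rule measurable_on_bilinear[OF bilinear_conv_bounded_bilinear[THEN iffD2, OF bounded_bilinear_inner] assms])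

lemma L2_inner_integrable:
  assumes "L2_on l f" "L2_on l g"
  shows "(\<lambda>s. f s \<bullet> g s) integrable_on {0..l}"
proof (rule meas_bound_int)
  show "(\<lambda>s. f s \<bullet> g s) measurable_on {0..l}"
    using assms by (intro inner_meas L2_meas)
  show "(\<lambda>x. (norm (f x) ^ 2 + norm (g x) ^ 2) / 2) integrable_on {0..l}"
    using assms unfolding L2_on_def by (intro integrable_on_divide integrable_add) auto
  fix x
  have "norm (f x \<bullet> g x) \<le> norm (f x) * norm (g x)"
    using Cauchy_Schwarz_ineq2 by simp
  moreover have "0 \<le> (norm (f x) - norm (g x))^2" by simp
  ultimately show "norm (f x \<bullet> g x) \<le> (norm (f x) ^ 2 + norm (g x) ^ 2) / 2"
    by (simp add: power2_eq_square algebra_simps)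
qed

lemma L2_add:
  assumes "L2_on l f" "L2_on l g"
  shows "L2_on l (\<lambda>s. f s + g s)"
proof (rule L2I)
  show "(\<lambda>s. f s + g s) measurable_on {0..l}" using assms by (intro measurable_on_add L2_meas)
  show "(\<lambda>x. 2 * norm (f x) ^ 2 + 2 * norm (g x) ^ 2) integrable_on {0..l}"
    using assms unfolding L2_on_def by (intro integrable_add integrable_on_mult_right) auto
  fix x
  have "norm (f x + g x) \<le> norm (f x) + norm (g x)" by (rule norm_triangle_ineq)
  then have "norm (f x + g x) ^ 2 \<le> (norm (f x) + norm (g x))^2"
    by (simp add: power_mono)
  also have "\<dots> \<le> 2 * norm (f x) ^ 2 + 2 * norm (g x) ^ 2"
    using sum_squares_bound[of "norm (f x)" "norm (g x)"] by (simp add: power2_eq_square algebra_simps)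
  finally show "norm (f x + g x) ^ 2 \<le> 2 * norm (f x) ^ 2 + 2 * norm (g x) ^ 2" .
qed

lemma L2_scale:
  assumes "L2_on l f"
  shows "L2_on l (\<lambda>s. c *\<^sub>R f s)"
proof (rule L2I)
  show "(\<lambda>s. c *\<^sub>R f s) measurable_on {0..l}" using assms by (intro measurable_on_scaleR_const L2_meas)
  show "(\<lambda>x. c^2 * norm (f x) ^ 2) integrable_on {0..l}"
    using assms unfolding L2_on_def by (intro integrable_on_mult_right) auto
qed (simp add: power_mult_distrib)

lemma L2_diff:
  assumes "L2_on l f" "L2_on l g"
  shows "L2_on l (\<lambda>s. f s - g s)"
  using L2_add[OF assms(1) L2_scale[OF assms(2), of "-1"]] by simp

lemma L2_cont_bounded:
  assumes "h integrable_on {0..l}" "\<And>x. x \<in> {0..l} \<Longrightarrow> norm (h x) \<le> B"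
  shows "L2_on l h"
proof (rule L2I)
  show "h measurable_on {0..l}" by (rule int_meas[OF assms(1)])
  show "(\<lambda>x. B^2) integrable_on {0..l}" by (rule integrable_const_ivl)
  fix x assume "x \<in> {0..l}"
  then show "norm (h x) ^ 2 \<le> B^2" using assms(2) by (simp add: power_mono)
qed

lemma L2_cont:
  assumes "continuous_on {0..l} h"
  shows "L2_on l h"
proof -
  obtain B where "\<forall>x\<in>{0..l}. norm (h x) \<le> B"
    using compact_imp_bounded[OF compact_continuous_image[OF assms compact_Icc]]
    by (auto simp: bounded_iff)
  then show ?thesis
    using L2_cont_bounded integrable_continuous_interval[OF assms] by blast
qed

lemma L2_const: "L2_on l (\<lambda>s. c)"
  by (rule L2_cont) simp

lemma quad_nonneg_zero:
  fixes X Y :: real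
  assumes "Y \<ge> 0" "\<And>c. 0 \<le> 2 * c * X + c^2 * Y"
  shows "X = 0"
proof -
  let ?c = "- X / (Y + 1)"
  have "0 \<le> 2 * ?c * X + ?c^2 * Y" by (rule assms(2))
  also have "2 * ?c * X + ?c^2 * Y = - (X^2 * (Y + 2)) / (Y+1)^2"
  proof -
    have d: "Y + 1 \<noteq> 0" using assms(1) by linarith
    have "2 * ?c * X + ?c^2 * Y = (2 * (- X) * X * (Y+1) + X^2 * Y) / (Y+1)^2"
      using d by (simp add: power2_eq_square diff_divide_distrib add_divide_distrib)
    also have "\<dots> = - (X^2 * (Y + 2)) / (Y+1)^2"
      by (simp add: power2_eq_square algebra_simps)
    finally show ?thesis .
  qed
  finally have "0 \<le> - (X^2 * (Y + 2)) / (Y+1)^2" .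
  then have "X^2 * (Y + 2) \<le> 0"
    using assms(1) by (simp add: divide_le_0_iff)
  then have "X^2 \<le> 0" using assms(1)
    by (metis add_nonneg_pos mult_le_0_iff not_le zero_less_numeral zero_le_power2 order_antisym)
  then show ?thesis by simp
qed

lemma ortho_zero:
  assumes u: "L2_on l u" and h: "L2_on l h" and z: "integral {0..l} (\<lambda>s. norm (u s) ^ 2) = 0"
  shows "integral {0..l} (\<lambda>s. u s \<bullet> h s) = 0"
proof (rule quad_nonneg_zero)
  show "0 \<le> integral {0..l} (\<lambda>s. norm (h s) ^ 2)"
    by (rule integral_nonneg[OF L2_sq_integrable[OF h]]) simp
  fix c :: real
  have i1: "(\<lambda>s. norm (u s) ^ 2) integrable_on {0..l}" by (rule L2_sq_integrable[OF u])
  have i2: "(\<lambda>s. u s \<bullet> h s) integrable_on {0..l}" by (rule L2_inner_integrable[OF u h])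
  have i3: "(\<lambda>s. norm (h s) ^ 2) integrable_on {0..l}" by (rule L2_sq_integrable[OF h])
  have eq: "\<And>s. norm (u s + c *\<^sub>R h s) ^ 2 = norm (u s) ^ 2 + (2 * c) * (u s \<bullet> h s) + c^2 * norm (h s) ^ 2"
    by (simp only: power2_norm_eq_inner) (simp add: inner_add_left inner_add_right inner_commute algebra_simps power2_eq_square)
  have "0 \<le> integral {0..l} (\<lambda>s. norm (u s + c *\<^sub>R h s) ^ 2)"
    by (rule integral_nonneg[OF L2_sq_integrable[OF L2_add[OF u L2_scale[OF h]]]]) simp
  also have "\<dots> = integral {0..l} (\<lambda>s. norm (u s) ^ 2) + (2 * c) * integral {0..l} (\<lambda>s. u s \<bullet> h s) + c^2 * integral {0..l} (\<lambda>s. norm (h s) ^ 2)"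
    unfolding eq using i1 i2 i3
    by (simp add: integral_add integral_mult_right integrable_add integrable_on_mult_right)
  finally show "0 \<le> 2 * c * integral {0..l} (\<lambda>s. u s \<bullet> h s) + c\<^sup>2 * integral {0..l} (\<lambda>s. norm (h s) ^ 2)"
    using z by simp
qed

lemma CS_scalar:
  fixes f :: "real \<Rightarrow> real"
  assumes ab: "a < b" and f: "f integrable_on {a..b}" and f2: "(\<lambda>x. f x ^ 2) integrable_on {a..b}"
  shows "(integral {a..b} f)^2 \<le> (b - a) * integral {a..b} (\<lambda>x. f x ^ 2)"
proof -
  define I where "I = integral {a..b} f"
  define \<mu> where "\<mu> = I / (b - a)"
  have eq: "\<And>x. (f x - \<mu>)^2 = f x ^ 2 + (- 2 * \<mu>) * f x + \<mu>^2"
    by (simp add: power2_eq_square algebra_simps)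
  have int3: "(\<lambda>x. f x ^ 2 + (- 2 * \<mu>) * f x + \<mu>^2) integrable_on {a..b}"
    using f f2 by (intro integrable_add integrable_on_mult_right) auto
  have "0 \<le> integral {a..b} (\<lambda>x. f x ^ 2 + (- 2 * \<mu>) * f x + \<mu>^2)"
    by (rule integral_nonneg[OF int3]) (metis eq zero_le_power2)
  also have "\<dots> = integral {a..b} (\<lambda>x. f x ^ 2) + (- 2 * \<mu>) * I + \<mu>^2 * (b - a)"
  proof -
    have i1: "(\<lambda>x. f x ^ 2 + (- 2 * \<mu>) * f x) integrable_on {a..b}"
      using f f2 by (intro integrable_add integrable_on_mult_right) auto
    have "integral {a..b} (\<lambda>x. f x ^ 2 + (- 2 * \<mu>) * f x + \<mu>^2)
        = integral {a..b} (\<lambda>x. f x ^ 2 + (- 2 * \<mu>) * f x) + integral {a..b} (\<lambda>x. \<mu>^2)"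
      by (rule integral_add[OF i1]) auto
    also have "integral {a..b} (\<lambda>x. f x ^ 2 + (- 2 * \<mu>) * f x) = integral {a..b} (\<lambda>x. f x ^ 2) + (- 2 * \<mu>) * I"
      unfolding I_def by (simp only: integral_add[OF f2 integrable_on_mult_right[OF f]] integral_mult_right)
    also have "integral {a..b} (\<lambda>x. \<mu>^2) = \<mu>^2 * (b - a)"
      using ab by simp
    finally show ?thesis .
  qed
  also have "\<dots> = integral {a..b} (\<lambda>x. f x ^ 2) - I^2 / (b - a)"
  proof -
    have e1: "\<mu> * (b - a) = I" using ab by (simp add: \<mu>_def)
    have "(- 2 * \<mu>) * I + \<mu>^2 * (b - a) = - (\<mu> * I)"
      using e1 by (simp add: power2_eq_square algebra_simps)
    also have "\<mu> * I = I^2 / (b - a)" by (simp add: \<mu>_def power2_eq_square)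
    finally show ?thesis by simp
  qed
  finally show ?thesis using ab unfolding I_def[symmetric]
    by (simp add: field_simps)
qed

lemma bb_cross: "bounded_bilinear cross3"
  using bilinear_conv_bounded_bilinear bilinear_cross by blast

lemma bl_cross_right: "bounded_linear (\<lambda>x. cross3 P x)"
  using bounded_bilinear.bounded_linear_right[OF bb_cross] by simp

lemma bl_cross_left: "bounded_linear (\<lambda>x. cross3 x u)"
  using bounded_bilinear.bounded_linear_left[OF bb_cross] by simp

lemma cross_par:
  fixes P u :: "real^3"
  assumes "P \<noteq> 0" "cross3 P u = 0"
  shows "u = ((P \<bullet> u) / (P \<bullet> P)) *\<^sub>R P"
proof -
  have "cross3 P (cross3 P u) = (P \<bullet> u) *\<^sub>R P - (P \<bullet> P) *\<^sub>R u"
    by (rule Lagrange)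
  with assms(2) have "(P \<bullet> P) *\<^sub>R u = (P \<bullet> u) *\<^sub>R P" by simp
  moreover have "P \<bullet> P \<noteq> 0" using assms(1) by simp
  ultimately show ?thesis
    by (metis (no_types, lifting) divide_inverse_commute scaleR_scaleR inverse_eq_divide
        left_inverse scaleR_one mult.commute)
qed

lemma cross_par2:
  fixes P u d :: "real^3"
  assumes "P \<noteq> 0" "cross3 P u = 0" "cross3 P d = 0"
  shows "cross3 u d = 0"
proof -
  have u: "u = ((P \<bullet> u) / (P \<bullet> P)) *\<^sub>R P" by (rule cross_par[OF assms(1,2)])
  have d: "d = ((P \<bullet> d) / (P \<bullet> P)) *\<^sub>R P" by (rule cross_par[OF assms(1,3)])
  show ?thesis by (subst u, subst d) (simp add: cross_mult_left cross_mult_right)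
qed

lemma cross_bound_K:
  fixes d1 d2 :: "real^3"
  assumes H: "\<And>P. cross3 P d1 = 0 \<Longrightarrow> cross3 P d2 = 0 \<Longrightarrow> P = 0"
  shows "\<exists>K>0. \<forall>P. norm P \<le> K * (norm (cross3 P d1) + norm (cross3 P d2))"
proof -
  let ?f = "\<lambda>P. norm (cross3 P d1) + norm (cross3 P d2)"
  have cont: "continuous_on (sphere 0 1) ?f"
    by (intro continuous_intros continuous_on_cross)
  have ne: "sphere (0::real^3) 1 \<noteq> {}"
  proof -
    have "(axis 1 1 :: real^3) \<in> sphere 0 1" by simp
    then show ?thesis by blast
  qed
  obtain x0 where x0: "x0 \<in> sphere (0::real^3) 1" "\<forall>y\<in>sphere 0 1. ?f x0 \<le> ?f y"
    using continuous_attains_inf[OF compact_sphere ne cont] by blast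
  define m where "m = ?f x0"
  have "x0 \<noteq> 0" using x0(1) by auto
  then have "m > 0" unfolding m_def using H[of x0]
    by (metis add_pos_nonneg add_nonneg_pos norm_ge_zero zero_less_norm_iff)
  have "norm P \<le> (1/m) * ?f P" for P
  proof (cases "P = 0")
    case True then show ?thesis by simp
  next
    case False
    define u where "u = (1 / norm P) *\<^sub>R P"
    have "u \<in> sphere 0 1" using False by (simp add: u_def)
    then have "m \<le> ?f u" using x0(2) m_def by auto
    also have "?f u = (1 / norm P) * ?f P"
      by (simp add: u_def cross_mult_left distrib_left)
    finally have "m * norm P \<le> ?f P" using False by (simp add: field_simps)
    then show ?thesis using \<open>m > 0\<close> by (simp add: field_simps)
  qed
  then show ?thesis using \<open>m > 0\<close> by (intro exI[of _ "1/m"]) auto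
qed

locale edge =
  fixes l :: real and Phi t :: "real \<Rightarrow> real^3"
  assumes lpos: "0 < l"
    and deriv: "\<And>s. s \<in> {0..l} \<Longrightarrow> (Phi has_vector_derivative t s) (at s within {0..l})"
    and tcont: "continuous_on {0..l} t"
    and tunit: "\<And>s. s \<in> {0..l} \<Longrightarrow> norm (t s) = 1"
begin

lemma ftc:
  assumes "0 \<le> x" "x \<le> y" "y \<le> l"
  shows "(t has_integral (Phi y - Phi x)) {x..y}"
proof (rule fundamental_theorem_of_calculus[OF assms(2)])
  fix s assume s: "s \<in> {x..y}"
  then have "s \<in> {0..l}" using assms by auto
  from deriv[OF this] show "(Phi has_vector_derivative t s) (at s within {x..y})"
    by (rule has_vector_derivative_within_subset) (use assms in auto)
qed

lemma cross_ftc: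
  assumes "0 \<le> x" "x \<le> y" "y \<le> l"
  shows "((\<lambda>s. cross3 P (t s)) has_integral cross3 P (Phi y - Phi x)) {x..y}"
  using has_integral_linear[OF ftc[OF assms] bl_cross_right[of P]] by (simp add: comp_def)

lemma lip:
  assumes L: "\<And>s. s \<in> {0..l} \<Longrightarrow> norm (cross3 P (t s)) \<le> L"
    and x: "x \<in> {0..l}" and y: "y \<in> {0..l}"
  shows "norm (cross3 P (Phi y - Phi x)) \<le> \<bar>y - x\<bar> * L"
proof -
  have L0: "0 \<le> L" using L[of 0] lpos by (meson atLeastAtMost_iff less_eq_real_def norm_ge_zero order_trans)
  have main: "norm (cross3 P (Phi b - Phi a)) \<le> (b - a) * L" if "a \<in> {0..l}" "b \<in> {0..l}" "a \<le> b" for a b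
  proof -
    have "norm (cross3 P (Phi b - Phi a)) \<le> L * Henstock_Kurzweil_Integration.content (cbox a b)"
      by (rule has_integral_bound[OF L0, of "\<lambda>s. cross3 P (t s)"])
         (use cross_ftc[of a b P] that L in auto)
    then show ?thesis using that by (simp add: mult.commute)
  qed
  show ?thesis
  proof (cases "x \<le> y")
    case True then show ?thesis using main[OF x y] by simp
  next
    case False
    then have "norm (cross3 P (Phi x - Phi y)) \<le> (x - y) * L" using main[OF y x] by simp
    moreover have "cross3 P (Phi y - Phi x) = - cross3 P (Phi x - Phi y)"
      by (metis cross_minus_right minus_diff_eq)
    ultimately show ?thesis using False by simp
  qed
qed

lemma straight_diff:
  assumes c: "\<And>s. s \<in> {0..l} \<Longrightarrow> t s = c" and x: "x \<in> {0..l}" and y: "y \<in> {0..l}"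
  shows "Phi y - Phi x = (y - x) *\<^sub>R c"
proof -
  have main: "Phi b - Phi a = (b - a) *\<^sub>R c" if "a \<in> {0..l}" "b \<in> {0..l}" "a \<le> b" for a b
  proof -
    have "(t has_integral (Phi b - Phi a)) {a..b}" using ftc[of a b] that by auto
    moreover have "(t has_integral ((b - a) *\<^sub>R c)) {a..b}"
    proof -
      have "((\<lambda>s. c) has_integral ((b - a) *\<^sub>R c)) {a..b}"
        using has_integral_const_real[of c a b] that by simp
      then show ?thesis
        by (rule has_integral_eq[rotated]) (use c that in auto)
    qed
    ultimately show ?thesis by (rule has_integral_unique)
  qed
  show ?thesis
  proof (cases "x \<le> y")
    case True then show ?thesis using main[OF x y] by simp
  next
    case False
    then have "Phi x - Phi y = (x - y) *\<^sub>R c" using main[OF y x] by simp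
    then show ?thesis by (metis minus_diff_eq scaleR_minus_left)
  qed
qed

lemma nonstraight:
  assumes ns: "\<not> (\<exists>c. \<forall>s\<in>{0..l}. t s = c)"
  shows "\<exists>b1\<in>{0..l}. \<exists>b2\<in>{0..l}. \<forall>P. cross3 P (Phi b1 - Phi 0) = 0 \<longrightarrow> cross3 P (Phi b2 - Phi 0) = 0 \<longrightarrow> P = 0"
proof (rule ccontr)
  assume H0: "\<not> ?thesis"
  then have H: "\<And>b1 b2. b1\<in>{0..l} \<Longrightarrow> b2\<in>{0..l} \<Longrightarrow> \<exists>P. P \<noteq> 0 \<and> cross3 P (Phi b1 - Phi 0) = 0 \<and> cross3 P (Phi b2 - Phi 0) = 0"
    by blast
  have l0: "(0::real) \<in> {0..l}" using lpos by auto
  have "\<exists>b1\<in>{0..l}. Phi b1 \<noteq> Phi 0"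
  proof (rule ccontr)
    assume "\<not> (\<exists>b1\<in>{0..l}. Phi b1 \<noteq> Phi 0)"
    then have c0: "\<And>s. s \<in> {0..l} \<Longrightarrow> Phi s = Phi 0" by blast
    have c: "Phi 0 = Phi s" if "s \<in> {0..l}" for s using c0[OF that] by (rule sym)
    have "((\<lambda>s. Phi 0) has_vector_derivative t 0) (at 0 within {0..l})"
      by (rule has_vector_derivative_transform[OF l0 c deriv[OF l0]])
    moreover have "((\<lambda>s. Phi 0) has_vector_derivative 0) (at 0 within {0..l})"
      by (rule has_vector_derivative_const)
    ultimately have "t 0 = 0"
      using vector_derivative_unique_within_closed_interval[of 0 l 0 "\<lambda>s. Phi 0" "t 0" 0] lpos l0
      unfolding cbox_interval by blast
    with tunit[OF l0] show False by simp
  qed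
  then obtain b1 where b1: "b1 \<in> {0..l}" "Phi b1 \<noteq> Phi 0" by blast
  define u where "u = Phi b1 - Phi 0"
  have u0: "u \<noteq> 0" using b1 by (simp add: u_def)
  have z: "cross3 (Phi s - Phi 0) u = 0" if s: "s \<in> {0..l}" for s
  proof -
    obtain P where P: "P \<noteq> 0" "cross3 P u = 0" "cross3 P (Phi s - Phi 0) = 0"
      using H[OF b1(1) s] u_def by blast
    have "cross3 u (Phi s - Phi 0) = 0" by (rule cross_par2[OF P])
    then show ?thesis by (metis cross_skew neg_equal_0_iff_equal)
  qed
  have tu: "cross3 (t s) u = 0" if s: "s \<in> {0..l}" for s
  proof -
    have d1: "((\<lambda>x. Phi x - Phi 0) has_vector_derivative t s) (at s within {0..l})"
      using has_vector_derivative_diff[OF deriv[OF s] has_vector_derivative_const[of "Phi 0"]] by simp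
    have d2: "((\<lambda>x. cross3 (Phi x - Phi 0) u) has_vector_derivative cross3 (t s) u) (at s within {0..l})"
      by (rule bounded_linear.has_vector_derivative[OF bl_cross_left d1])
    have d3: "((\<lambda>x. 0) has_vector_derivative cross3 (t s) u) (at s within {0..l})"
      by (rule has_vector_derivative_transform[OF s _ d2]) (simp add: z)
    have d4: "((\<lambda>x. 0::real^3) has_vector_derivative 0) (at s within {0..l})"
      by (rule has_vector_derivative_const)
    show ?thesis
      using vector_derivative_unique_within_closed_interval[of 0 l s "\<lambda>x. 0" "cross3 (t s) u" 0] lpos s d3 d4
      unfolding cbox_interval by blast
  qed
  have par: "t s = ((u \<bullet> t s) / (u \<bullet> u)) *\<^sub>R u" if s: "s \<in> {0..l}" for s
  proof -
    have "cross3 u (t s) = 0" using tu[OF s] by (metis cross_skew neg_equal_0_iff_equal)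
    then show ?thesis by (rule cross_par[OF u0])
  qed
  define \<phi> where "\<phi> s = t s \<bullet> u" for s
  have uu: "u \<bullet> u = norm u ^ 2" by (simp add: power2_norm_eq_inner)
  have nu: "norm u > 0" using u0 by simp
  have absphi: "\<bar>\<phi> s\<bar> = norm u" if s: "s \<in> {0..l}" for s
  proof -
    have "1 = norm (t s)" using tunit[OF s] by simp
    also have "\<dots> = \<bar>u \<bullet> t s\<bar> / (u \<bullet> u) * norm u" by (subst par[OF s]) (simp add: abs_div)
    finally have "1 = \<bar>\<phi> s\<bar> / norm u"
      using nu u0 by (simp add: \<phi>_def inner_commute uu power2_eq_square)
    then have "norm u = \<bar>\<phi> s\<bar>" using nu by (simp add: field_simps)
    then show ?thesis by simp
  qed
  have "\<phi> constant_on {0..l}"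
  proof (rule continuous_discrete_range_constant)
    show "connected {0..l::real}" by simp
    show "continuous_on {0..l} \<phi>" unfolding \<phi>_def by (intro continuous_intros tcont)
    fix x assume x: "x \<in> {0..l}"
    show "\<exists>e>0. \<forall>y. y \<in> {0..l} \<and> \<phi> y \<noteq> \<phi> x \<longrightarrow> e \<le> norm (\<phi> y - \<phi> x)"
    proof (intro exI[of _ "norm u"] conjI allI impI)
      show "0 < norm u" by (rule nu)
      fix y assume y: "y \<in> {0..l} \<and> \<phi> y \<noteq> \<phi> x"
      have "\<bar>\<phi> y\<bar> = norm u" "\<bar>\<phi> x\<bar> = norm u" using absphi x y by auto
      with y show "norm u \<le> norm (\<phi> y - \<phi> x)" by (auto simp: abs_if split: if_splits)
    qed
  qed
  then obtain k where k: "\<And>s. s \<in> {0..l} \<Longrightarrow> \<phi> s = k" by (auto simp: constant_on_def)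
  have "\<forall>s\<in>{0..l}. t s = (k / (u \<bullet> u)) *\<^sub>R u"
  proof
    fix s assume s: "s \<in> {0..l}"
    have "u \<bullet> t s = k" using k[OF s] by (simp add: \<phi>_def inner_commute)
    then show "t s = (k / (u \<bullet> u)) *\<^sub>R u" using par[OF s] by metis
  qed
  with ns show False by blast
qed

end

lemma cross_norm_le: "norm (cross3 x y) \<le> norm x * norm y"
proof -
  have "(norm (cross3 x y))^2 \<le> (norm x * norm y)^2"
    using norm_cross[of x y] by (simp add: power_mult_distrib)
  then show ?thesis by (rule power2_le_imp_le) simp
qed

definition Lfun :: "real \<Rightarrow> (real \<Rightarrow> real^3) \<Rightarrow> real^3 \<Rightarrow> real" where
  "Lfun l t P = (if (\<exists>c. \<forall>s\<in>{0..l}. t s = c) then norm (cross3 P (t 0)) else norm P)"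

lemma max3:
  fixes f :: "real \<Rightarrow> real"
  shows "\<exists>b\<in>{x,y,z}. f x \<le> f b \<and> f y \<le> f b \<and> f z \<le> f b"
  by (cases "f x \<le> f y"; cases "f y \<le> f z"; cases "f x \<le> f z") auto

context edge
begin

lemma Lf_bound:
  assumes s: "s \<in> {0..l}"
  shows "norm (cross3 P (t s)) \<le> Lfun l t P"
proof (cases "\<exists>c. \<forall>s\<in>{0..l}. t s = c")
  case True
  then obtain c where c: "\<And>s. s \<in> {0..l} \<Longrightarrow> t s = c" by blast
  have "t s = t 0" using c[OF s] c[of 0] lpos by simp
  then show ?thesis using True by (simp add: Lfun_def)
next
  case False
  have "norm (cross3 P (t s)) \<le> norm P * norm (t s)" by (rule cross_norm_le)
  moreover have "Lfun l t P = norm P" using False unfolding Lfun_def by (simp only: if_False)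
  ultimately show ?thesis using tunit[OF s] by simp
qed

lemma pick:
  "\<exists>K>0. \<forall>P Qp. \<exists>b\<in>{0..l}. Lfun l t P \<le> K * norm (Qp - cross3 P (Phi l - Phi b))
      \<and> norm Qp \<le> K * norm (Qp - cross3 P (Phi l - Phi b))
      \<and> norm (Qp - cross3 P (Phi l - Phi 0)) \<le> K * norm (Qp - cross3 P (Phi l - Phi b))"
proof (cases "\<exists>c. \<forall>s\<in>{0..l}. t s = c")
  case True
  then obtain c where c: "\<And>s. s \<in> {0..l} \<Longrightarrow> t s = c" by blast
  have l0: "(0::real) \<in> {0..l}" "l \<in> {0..l}" using lpos by auto
  have c0: "t 0 = c" using c[OF l0(1)] .
  have K: "0 < 1 + 2 / l" using lpos by (simp add: add_pos_pos)
  show ?thesis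
  proof (intro exI[of _ "1 + 2 / l"] conjI K allI)
    fix P Qp
    define g where "g b = Qp - cross3 P (Phi l - Phi b)" for b
    have gb: "g b = Qp - (l - b) *\<^sub>R cross3 P c" if "b \<in> {0..l}" for b
      using straight_diff[OF c that l0(2)] by (simp add: g_def cross_mult_right)
    have gl: "g l = Qp" using gb[OF l0(2)] by simp
    have g0: "g 0 = Qp - l *\<^sub>R cross3 P c" using gb[OF l0(1)] by simp
    have Pc: "l * norm (cross3 P c) \<le> norm (g l) + norm (g 0)"
    proof -
      have "l *\<^sub>R cross3 P c = g l - g 0" using gl g0 by simp
      then have "l * norm (cross3 P c) = norm (g l - g 0)" using lpos by (metis abs_of_pos norm_scaleR)
      also have "\<dots> \<le> norm (g l) + norm (g 0)" by (rule norm_triangle_ineq4)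
      finally show ?thesis .
    qed
    obtain b where b: "b \<in> {0, l}" "norm (g l) \<le> norm (g b)" "norm (g 0) \<le> norm (g b)"
      by (cases "norm (g l) \<le> norm (g 0)") auto
    have bl: "b \<in> {0..l}" using b(1) l0 by auto
    have M0: "0 \<le> norm (g b)" by simp
    have "l * norm (cross3 P c) \<le> 2 * norm (g b)" using Pc b by linarith
    then have "norm (cross3 P c) \<le> (2 / l) * norm (g b)" using lpos by (simp add: field_simps)
    then have L: "Lfun l t P \<le> (1 + 2 / l) * norm (g b)"
      using True c0 M0 by (simp add: Lfun_def distrib_right) (smt (verit) norm_ge_zero)
    have nn: "0 \<le> 2 * norm (g b) / l" using lpos by simp
    have ee: "(1 + 2 / l) * norm (g b) = norm (g b) + 2 * norm (g b) / l" by (simp add: distrib_right)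
    have Q1: "norm Qp \<le> (1 + 2 / l) * norm (g b)"
      unfolding ee using b(2) nn by (simp add: gl)
    have Q2: "norm (g 0) \<le> (1 + 2 / l) * norm (g b)"
      unfolding ee using b(3) nn by linarith
    show "\<exists>b\<in>{0..l}. Lfun l t P \<le> (1 + 2 / l) * norm (Qp - cross3 P (Phi l - Phi b))
      \<and> norm Qp \<le> (1 + 2 / l) * norm (Qp - cross3 P (Phi l - Phi b))
      \<and> norm (Qp - cross3 P (Phi l - Phi 0)) \<le> (1 + 2 / l) * norm (Qp - cross3 P (Phi l - Phi b))"
      using bl L Q1 Q2 unfolding g_def by blast
  qed
next
  case False
  obtain b1 b2 where b12: "b1 \<in> {0..l}" "b2 \<in> {0..l}"
    and H: "\<And>P. cross3 P (Phi b1 - Phi 0) = 0 \<Longrightarrow> cross3 P (Phi b2 - Phi 0) = 0 \<Longrightarrow> P = 0"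
    using nonstraight[OF False] by blast
  obtain K0 where K0: "K0 > 0" "\<And>P. norm P \<le> K0 * (norm (cross3 P (Phi b1 - Phi 0)) + norm (cross3 P (Phi b2 - Phi 0)))"
    using cross_bound_K[OF H] by blast
  have l0: "(0::real) \<in> {0..l}" "l \<in> {0..l}" using lpos by auto
  define K where "K = 1 + 4 * K0 * (1 + l)"
  have K: "K > 0" using K0 lpos by (simp add: K_def add_pos_nonneg)
  show ?thesis
  proof (intro exI[of _ K] conjI K allI)
    fix P Qp
    define g where "g b = Qp - cross3 P (Phi l - Phi b)" for b
    have gd: "g x - g 0 = cross3 P (Phi x - Phi 0)" for x
    proof -
      have "g x - g 0 = cross3 P (Phi l - Phi 0) - cross3 P (Phi l - Phi x)" by (simp add: g_def)
      also have "\<dots> = cross3 P ((Phi l - Phi 0) - (Phi l - Phi x))"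
        by (rule Cross3.right_diff_distrib[symmetric])
      finally show ?thesis by simp
    qed
    obtain b where b: "b \<in> {0, b1, b2}" "norm (g 0) \<le> norm (g b)" "norm (g b1) \<le> norm (g b)" "norm (g b2) \<le> norm (g b)"
      using max3[where f="\<lambda>x. norm (g x)" and x=0 and y=b1 and z=b2] by blast
    have bl: "b \<in> {0..l}" using b(1) l0 b12 by auto
    have M0: "0 \<le> norm (g b)" by simp
    have "norm (cross3 P (Phi b1 - Phi 0)) \<le> 2 * norm (g b)"
      using gd[of b1] norm_triangle_ineq4[of "g b1" "g 0"] b by simp
    moreover have "norm (cross3 P (Phi b2 - Phi 0)) \<le> 2 * norm (g b)"
      using gd[of b2] norm_triangle_ineq4[of "g b2" "g 0"] b by simp
    ultimately have "norm P \<le> K0 * (4 * norm (g b))"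
      using K0(2)[of P] K0(1) by (smt (verit) mult_left_mono)
    then have nP: "norm P \<le> 4 * K0 * norm (g b)" by simp
    have Pl: "norm P \<le> K * norm (g b)"
    proof -
      have "4 * K0 \<le> K"
      proof -
        have "4 * K0 * 1 \<le> 4 * K0 * (1 + l)" using K0(1) lpos by (intro mult_left_mono) auto
        then show ?thesis by (simp add: K_def)
      qed
      then have "4 * K0 * norm (g b) \<le> K * norm (g b)"
        using M0 by (intro mult_right_mono) auto
      then show ?thesis using nP by linarith
    qed
    have L: "Lfun l t P \<le> K * norm (g b)"
    proof -
      have "Lfun l t P = norm P" using False unfolding Lfun_def by (simp only: if_False)
      then show ?thesis using Pl by simp
    qed
    have Q1: "norm Qp \<le> K * norm (g b)"
    proof -
      have "Qp = g b + cross3 P (Phi l - Phi b)" by (simp add: g_def)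
      then have "norm Qp \<le> norm (g b) + norm (cross3 P (Phi l - Phi b))"
        by (metis norm_triangle_ineq)
      also have "norm (cross3 P (Phi l - Phi b)) \<le> \<bar>l - b\<bar> * norm P"
      proof (rule lip[OF _ bl l0(2)])
        fix s assume "s \<in> {0..l}"
        then show "norm (cross3 P (t s)) \<le> norm P"
          using cross_norm_le[of P "t s"] tunit by simp
      qed
      also have "\<bar>l - b\<bar> * norm P \<le> l * (4 * K0 * norm (g b))"
        using bl nP lpos by (intro mult_mono) auto
      finally have "norm Qp \<le> norm (g b) + l * (4 * K0 * norm (g b))" by simp
      also have "\<dots> \<le> K * norm (g b)"
        using M0 K0 lpos by (simp add: K_def algebra_simps)
      finally show ?thesis .
    qed
    have Q2: "norm (g 0) \<le> K * norm (g b)"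
    proof -
      have "1 * norm (g b) \<le> K * norm (g b)"
        using M0 K0 lpos by (intro mult_right_mono) (auto simp: K_def)
      then show ?thesis using b(2) by simp
    qed
    show "\<exists>b\<in>{0..l}. Lfun l t P \<le> K * norm (Qp - cross3 P (Phi l - Phi b))
      \<and> norm Qp \<le> K * norm (Qp - cross3 P (Phi l - Phi b))
      \<and> norm (Qp - cross3 P (Phi l - Phi 0)) \<le> K * norm (Qp - cross3 P (Phi l - Phi b))"
      using bl L Q1 Q2 unfolding g_def by blast
  qed
qed

end

lemma edge_analytic:
  fixes g :: "real \<Rightarrow> real^3"
  assumes lpos: "0 < l" and L0: "0 \<le> L"
    and lipg: "\<And>x y. x \<in> {0..l} \<Longrightarrow> y \<in> {0..l} \<Longrightarrow> norm (g x - g y) \<le> \<bar>x - y\<bar> * L"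
    and intv: "\<And>a b. 0 \<le> a \<Longrightarrow> a < b \<Longrightarrow> b \<le> l \<Longrightarrow> (b - a) * L \<le> norm (g b) \<Longrightarrow> (b - a) * (norm (g b) - (b - a) * L)^2 \<le> N"
    and b: "b \<in> {0..l}" and K: "0 < K" and LK: "L \<le> K * norm (g b)"
  shows "norm (g b)^2 \<le> 4 * N / min (l/2) (1/(4*K))"
proof -
  define \<delta> where "\<delta> = min (l/2) (1/(4*K))"
  have d0: "0 < \<delta>" using lpos K by (simp add: \<delta>_def)
  have dl: "\<delta> \<le> l/2" by (simp add: \<delta>_def)
  have dK: "\<delta> * K \<le> 1/4" using K by (simp add: \<delta>_def min_def field_simps split: if_splits)
  define G where "G = norm (g b)"
  have G0: "0 \<le> G" by (simp add: G_def)
  have dL: "\<delta> * L \<le> G / 4"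
  proof -
    have "\<delta> * L \<le> \<delta> * (K * G)" using LK d0 by (simp add: G_def mult_left_mono)
    also have "\<dots> = (\<delta> * K) * G" by simp
    also have "\<dots> \<le> (1/4) * G" using dK G0 by (rule mult_right_mono)
    finally show ?thesis by simp
  qed
  obtain a b' where ab: "0 \<le> a" "a < b'" "b' \<le> l" "b' - a = \<delta>" "\<bar>b' - b\<bar> \<le> \<delta>"
  proof (cases "\<delta> \<le> b")
    case True
    then show ?thesis using that[of "b - \<delta>" b] b d0 by auto
  next
    case False
    then show ?thesis using that[of b "b + \<delta>"] b d0 dl by auto
  qed
  have b'l: "b' \<in> {0..l}" using ab by auto
  have "norm (g b') \<ge> G - \<delta> * L"
  proof -
    have "norm (g b - g b') \<le> \<bar>b - b'\<bar> * L" by (rule lipg[OF b b'l])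
    also have "\<dots> \<le> \<delta> * L" using ab(5) L0 by (simp add: abs_minus_commute mult_right_mono)
    finally have "norm (g b - g b') \<le> \<delta> * L" .
    moreover have "G \<le> norm (g b') + norm (g b - g b')"
      unfolding G_def by (metis norm_triangle_sub add.commute)
    ultimately show ?thesis by linarith
  qed
  then have gb': "norm (g b') \<ge> 3/4 * G" using dL by linarith
  have "(b' - a) * L \<le> norm (g b')" unfolding ab(4) using dL gb' G0 by linarith
  from intv[OF ab(1-3) this] have "\<delta> * (norm (g b') - \<delta> * L)^2 \<le> N" using ab(4) by simp
  moreover have "(G/2)^2 \<le> (norm (g b') - \<delta> * L)^2"
    using gb' dL G0 by (intro power_mono) auto
  ultimately have "\<delta> * (G/2)^2 \<le> N"
    by (meson d0 less_eq_real_def mult_left_mono order_trans)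
  then have "G^2 \<le> 4 * N / \<delta>" using d0 by (simp add: field_simps power2_eq_square)
  then show ?thesis by (simp add: G_def \<delta>_def)
qed

context edge
begin

lemma edge_final:
  "\<exists>C>0. \<forall>P Qp N. (\<forall>a b. 0 \<le> a \<longrightarrow> a < b \<longrightarrow> b \<le> l \<longrightarrow>
        (b - a) * Lfun l t P \<le> norm (Qp - cross3 P (Phi l - Phi b)) \<longrightarrow>
        (b - a) * (norm (Qp - cross3 P (Phi l - Phi b)) - (b - a) * Lfun l t P)^2 \<le> N)
     \<longrightarrow> (Lfun l t P)^2 \<le> C * N \<and> (norm Qp)^2 \<le> C * N \<and> (norm (Qp - cross3 P (Phi l - Phi 0)))^2 \<le> C * N"
proof -
  obtain K where K: "K > 0" and Kp: "\<And>P Qp. \<exists>b\<in>{0..l}. Lfun l t P \<le> K * norm (Qp - cross3 P (Phi l - Phi b))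
      \<and> norm Qp \<le> K * norm (Qp - cross3 P (Phi l - Phi b))
      \<and> norm (Qp - cross3 P (Phi l - Phi 0)) \<le> K * norm (Qp - cross3 P (Phi l - Phi b))"
    using pick by blast
  define \<delta> where "\<delta> = min (l/2) (1/(4*K))"
  have d0: "0 < \<delta>" using lpos K by (simp add: \<delta>_def)
  define C where "C = K^2 * (4 / \<delta>)"
  have C0: "C > 0" using K d0 by (simp add: C_def)
  show ?thesis
  proof (intro exI[of _ C] conjI C0 allI impI)
    fix P Qp N
    assume H: "\<forall>a b. 0 \<le> a \<longrightarrow> a < b \<longrightarrow> b \<le> l \<longrightarrow>
        (b - a) * Lfun l t P \<le> norm (Qp - cross3 P (Phi l - Phi b)) \<longrightarrow>
        (b - a) * (norm (Qp - cross3 P (Phi l - Phi b)) - (b - a) * Lfun l t P)^2 \<le> N"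
    define g where "g b = Qp - cross3 P (Phi l - Phi b)" for b
    obtain b where b: "b \<in> {0..l}" "Lfun l t P \<le> K * norm (g b)" "norm Qp \<le> K * norm (g b)"
        "norm (g 0) \<le> K * norm (g b)"
      using Kp[of P Qp] unfolding g_def by blast
    have L0: "0 \<le> Lfun l t P" by (simp add: Lfun_def)
    have lipg: "norm (g x - g y) \<le> \<bar>x - y\<bar> * Lfun l t P" if "x \<in> {0..l}" "y \<in> {0..l}" for x y
    proof -
      have "g x - g y = cross3 P (Phi l - Phi y) - cross3 P (Phi l - Phi x)" by (simp add: g_def)
      also have "\<dots> = cross3 P ((Phi l - Phi y) - (Phi l - Phi x))"
        by (rule Cross3.right_diff_distrib[symmetric])
      also have "\<dots> = cross3 P (Phi x - Phi y)" by simp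
      finally have "g x - g y = cross3 P (Phi x - Phi y)" .
      moreover have "norm (cross3 P (Phi x - Phi y)) \<le> \<bar>x - y\<bar> * Lfun l t P"
        by (rule lip[OF Lf_bound that(2,1)])
      ultimately show ?thesis by simp
    qed
    have G: "norm (g b)^2 \<le> 4 * N / \<delta>"
      unfolding \<delta>_def
      by (rule edge_analytic[OF lpos L0 lipg _ b(1) K b(2)]) (use H g_def in auto)
    have sq: "x^2 \<le> C * N" if "0 \<le> x" "x \<le> K * norm (g b)" for x
    proof -
      have "x^2 \<le> (K * norm (g b))^2" using that by (intro power_mono) auto
      also have "\<dots> = K^2 * norm (g b)^2" by (simp add: power_mult_distrib)
      also have "\<dots> \<le> K^2 * (4 * N / \<delta>)" using G by (intro mult_left_mono) auto
      also have "\<dots> = C * N" by (simp add: C_def)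
      finally show ?thesis .
    qed
    show "(Lfun l t P)^2 \<le> C * N" using sq[OF L0 b(2)] .
    show "(norm Qp)^2 \<le> C * N" using sq[OF _ b(3)] by simp
    show "(norm (Qp - cross3 P (Phi l - Phi 0)))^2 \<le> C * N" using sq[OF _ b(4)] by (simp add: g_def)
  qed
qed

end

definition sc1 :: "real \<Rightarrow> (nat \<Rightarrow> real) \<Rightarrow> (nat \<Rightarrow> real)" where
  "sc1 r c = (\<lambda>i. r * c i)"
definition sc2 :: "real \<Rightarrow> (nat \<Rightarrow> real^3) \<Rightarrow> (nat \<Rightarrow> real^3)" where
  "sc2 r c = (\<lambda>i. r *\<^sub>R c i)"

lemma vs1: "Vector_Spaces.vector_space sc1"
  by unfold_locales (auto simp: sc1_def fun_eq_iff algebra_simps)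

lemma vs2: "Vector_Spaces.vector_space sc2"
  by unfold_locales (auto simp: sc2_def fun_eq_iff algebra_simps scaleR_add_right scaleR_add_left)

lemma vsp: "vector_space_pair sc1 sc2"
  using vs1 vs2 by (simp add: vector_space_pair_def)

lemma vsp2: "vector_space_pair sc2 sc1"
  using vs1 vs2 by (simp add: vector_space_pair_def)

lemma fun_sum_apply: "(sum f A) x = (\<Sum>a\<in>A. f a x)" for f :: "'a \<Rightarrow> 'b \<Rightarrow> 'c::comm_monoid_add"
  by (induction A rule: infinite_finite_induct) auto

lemma LA:
  fixes S J :: "nat set" and f :: "nat \<Rightarrow> nat \<Rightarrow> real^3"
  assumes S: "finite S" and J: "finite J"
    and inj: "\<And>c. (\<forall>j\<in>J. (\<Sum>i\<in>S. c i *\<^sub>R f i j) = 0) \<Longrightarrow> \<forall>i\<in>S. c i = 0"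
  shows "\<exists>K>0. \<forall>c. \<forall>i\<in>S. \<bar>c i\<bar> \<le> K * (\<Sum>j\<in>J. norm (\<Sum>i\<in>S. c i *\<^sub>R f i j))"
proof -
  interpret vector_space_pair sc1 sc2 by (rule vsp)
  define L where "L c = (\<lambda>j. if j \<in> J then (\<Sum>i\<in>S. c i *\<^sub>R f i j) else 0)" for c :: "nat \<Rightarrow> real"
  define V where "V = {c :: nat \<Rightarrow> real. \<forall>i. i \<notin> S \<longrightarrow> c i = 0}"
  have linL: "Vector_Spaces.linear sc1 sc2 L"
    unfolding Vector_Spaces.linear_iff
  proof (intro conjI vs1 vs2 allI)
    fix x y :: "nat \<Rightarrow> real"
    show "L (x + y) = L x + L y"
      by (auto simp: L_def fun_eq_iff scaleR_add_left sum.distrib)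
    fix r :: real
    show "L (sc1 r x) = sc2 r (L x)"
      by (auto simp: L_def sc1_def sc2_def fun_eq_iff scaleR_sum_right)
  qed
  have subV: "vs1.subspace V"
    unfolding vs1.subspace_def V_def by (auto simp: sc1_def)
  have injV: "inj_on L V"
  proof (rule inj_onI)
    fix x y assume x: "x \<in> V" and y: "y \<in> V" and e: "L x = L y"
    have "\<forall>j\<in>J. (\<Sum>i\<in>S. (x i - y i) *\<^sub>R f i j) = 0"
    proof
      fix j assume j: "j \<in> J"
      have "L x j = L y j" using e by simp
      then have "(\<Sum>i\<in>S. x i *\<^sub>R f i j) - (\<Sum>i\<in>S. y i *\<^sub>R f i j) = 0" using j by (simp add: L_def)
      then show "(\<Sum>i\<in>S. (x i - y i) *\<^sub>R f i j) = 0"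
        by (simp add: scaleR_diff_left sum_subtractf)
    qed
    from inj[OF this] have "\<forall>i\<in>S. x i = y i" by simp
    moreover have "\<forall>i. i \<notin> S \<longrightarrow> x i = y i" using x y by (simp add: V_def)
    ultimately show "x = y" by (auto simp: fun_eq_iff)
  qed
  obtain g where g: "Vector_Spaces.linear sc2 sc1 g" "\<forall>v\<in>V. g (L v) = v"
    using linear_exists_left_inverse_on[OF linL subV injV] by blast
  interpret p2: vector_space_pair sc2 sc1 by (rule vsp2)
  define E where "E j a = (\<lambda>j'. if j' = j then (axis a (1::real) :: real^3) else 0)" for j :: nat and a :: 3
  define KK where "KK i = (\<Sum>j\<in>J. \<Sum>a\<in>UNIV. \<bar>g (E j a) i\<bar>)" for i
  define K where "K = 1 + (\<Sum>i\<in>S. KK i)"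
  have KK0: "0 \<le> KK i" for i by (simp add: KK_def sum_nonneg)
  have K0: "K > 0" using KK0 by (simp add: K_def sum_nonneg add_pos_nonneg)
  have KKK: "KK i \<le> K" if "i \<in> S" for i
  proof -
    have "KK i \<le> (\<Sum>i\<in>S. KK i)" using that S KK0 by (intro member_le_sum) auto
    then show ?thesis by (simp add: K_def)
  qed
  show ?thesis
  proof (intro exI[of _ K] conjI K0 allI ballI)
    fix c :: "nat \<Rightarrow> real" and i assume i: "i \<in> S"
    define c' where "c' k = (if k \<in> S then c k else 0)" for k
    have c'V: "c' \<in> V" by (simp add: V_def c'_def)
    have Lc: "L c' = L c" by (simp add: L_def c'_def fun_eq_iff)
    define x where "x j a = (L c j) $ a" for j a
    have decomp: "L c = (\<Sum>j\<in>J. \<Sum>a\<in>UNIV. sc2 (x j a) (E j a))"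
    proof (rule ext)
      fix j'
      have "(\<Sum>j\<in>J. \<Sum>a\<in>UNIV. sc2 (x j a) (E j a)) j' = (\<Sum>j\<in>J. \<Sum>a\<in>UNIV. x j a *\<^sub>R E j a j')"
        by (simp add: fun_sum_apply sc2_def)
      also have "\<dots> = (\<Sum>j\<in>J. if j' = j then (\<Sum>a\<in>UNIV. x j a *\<^sub>R axis a 1) else 0)"
        by (intro sum.cong) (auto simp: E_def)
      also have "\<dots> = (if j' \<in> J then (\<Sum>a\<in>UNIV. x j' a *\<^sub>R axis a 1) else 0)"
        using J by (simp add: sum.delta')
      also have "\<dots> = L c j'"
      proof -
        have rep: "(\<Sum>a\<in>UNIV. (v$a) *\<^sub>R axis a 1) = v" for v :: "real^3"
          using basis_expansion[of v] by (simp add: scalar_mult_eq_scaleR)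
        show ?thesis using rep[of "L c j'"] by (auto simp: x_def L_def)
      qed
      finally show "L c j' = (\<Sum>j\<in>J. \<Sum>a\<in>UNIV. sc2 (x j a) (E j a)) j'" by simp
    qed
    have "c' = g (L c')" using g(2) c'V by simp
    also have "\<dots> = g (\<Sum>j\<in>J. \<Sum>a\<in>UNIV. sc2 (x j a) (E j a))" using Lc decomp by simp
    also have "\<dots> = (\<Sum>j\<in>J. \<Sum>a\<in>UNIV. sc1 (x j a) (g (E j a)))"
      by (simp add: p2.linear_sum[OF g(1)] p2.linear_scale[OF g(1)])
    finally have ci: "c i = (\<Sum>j\<in>J. \<Sum>a\<in>UNIV. x j a * g (E j a) i)"
      using i by (simp add: c'_def fun_sum_apply sc1_def fun_eq_iff) (metis (mono_tags, lifting))
    have "\<bar>c i\<bar> \<le> (\<Sum>j\<in>J. \<Sum>a\<in>UNIV. \<bar>x j a\<bar> * \<bar>g (E j a) i\<bar>)"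
      unfolding ci by (rule order_trans[OF sum_abs]) (auto intro!: sum_mono order_trans[OF sum_abs] simp: abs_mult)
    also have "\<dots> \<le> (\<Sum>j\<in>J. \<Sum>a\<in>UNIV. norm (L c j) * \<bar>g (E j a) i\<bar>)"
      by (intro sum_mono mult_right_mono) (auto simp: x_def component_le_norm_cart)
    also have "\<dots> \<le> (\<Sum>j\<in>J. (\<Sum>j'\<in>J. norm (L c j')) * (\<Sum>a\<in>UNIV. \<bar>g (E j a) i\<bar>))"
    proof (intro sum_mono)
      fix j assume j: "j \<in> J"
      have "norm (L c j) \<le> (\<Sum>j'\<in>J. norm (L c j'))"
        using J j by (intro member_le_sum) auto
      then show "(\<Sum>a\<in>UNIV. norm (L c j) * \<bar>g (E j a) i\<bar>) \<le> (\<Sum>j'\<in>J. norm (L c j')) * (\<Sum>a\<in>UNIV. \<bar>g (E j a) i\<bar>)"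
        by (simp add: sum_distrib_left[symmetric] mult_right_mono sum_nonneg)
    qed
    also have "\<dots> = (\<Sum>j'\<in>J. norm (L c j')) * KK i"
      by (simp add: KK_def sum_distrib_left)
    also have "\<dots> \<le> (\<Sum>j'\<in>J. norm (L c j')) * K"
      using KKK[OF i] by (intro mult_left_mono) (auto simp: sum_nonneg)
    also have "(\<Sum>j'\<in>J. norm (L c j')) = (\<Sum>j\<in>J. norm (\<Sum>i\<in>S. c i *\<^sub>R f i j))"
      by (simp add: L_def)
    finally show "\<bar>c i\<bar> \<le> K * (\<Sum>j\<in>J. norm (\<Sum>i\<in>S. c i *\<^sub>R f i j))" by (simp add: mult.commute)
  qed
qed

lemma sum_single:
  fixes F :: "nat \<Rightarrow> 'a::comm_monoid_add"
  assumes "k < n" "\<And>i. i < n \<Longrightarrow> i \<noteq> k \<Longrightarrow> F i = 0"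
  shows "(\<Sum>i<n. F i) = F k"
proof -
  have "(\<Sum>i<n. F i) = (\<Sum>i<n. if i = k then F k else 0)"
    using assms(2) by (intro sum.cong) auto
  also have "\<dots> = F k" using assms(1) by (simp add: sum.delta')
  finally show ?thesis .
qed

lemma b_edge:
  assumes k: "k < nE"
  shows "b_form nV nE src tgt ell Phi q p Pp Pm Qp Qm \<alpha> \<beta>
      (\<lambda>i. if i = k then v0 else (\<lambda>s. 0)) (\<lambda>i. if i = k then dv0 else (\<lambda>s. 0))
      (\<lambda>i. if i = k then w0 else (\<lambda>s. 0)) (\<lambda>i. if i = k then dw0 else (\<lambda>s. 0)) (\<lambda>j. 0) (\<lambda>j. 0)
   = integral {0..ell k} (\<lambda>s. - (p k s \<bullet> (dv0 s + cross3 (tangent (Phi k) (ell k) s) (w0 s))) - q k s \<bullet> dw0 s)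
     + (Pp k \<bullet> v0 (ell k) - Pm k \<bullet> v0 0) + (Qp k \<bullet> w0 (ell k) - Qm k \<bullet> w0 0)
     + \<alpha> \<bullet> integral {0..ell k} v0 + \<beta> \<bullet> integral {0..ell k} w0"
proof -
  have s1: "(\<Sum>i<nE. integral {0..ell i}
        (\<lambda>s. - (p i s \<bullet> ((if i = k then dv0 else (\<lambda>s. 0)) s + cross3 (tangent (Phi i) (ell i) s) ((if i = k then w0 else (\<lambda>s. 0)) s)))
             - q i s \<bullet> (if i = k then dw0 else (\<lambda>s. 0)) s))
      = integral {0..ell k} (\<lambda>s. - (p k s \<bullet> (dv0 s + cross3 (tangent (Phi k) (ell k) s) (w0 s))) - q k s \<bullet> dw0 s)"
    by (rule trans[OF sum_single[OF k]]) auto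
  have s2: "(\<Sum>i<nE. Pp i \<bullet> (if i = k then v0 else (\<lambda>s. 0)) (ell i) - Pm i \<bullet> (if i = k then v0 else (\<lambda>s. 0)) 0)
      = Pp k \<bullet> v0 (ell k) - Pm k \<bullet> v0 0"
    by (rule trans[OF sum_single[OF k]]) auto
  have s3: "(\<Sum>i<nE. Qp i \<bullet> (if i = k then w0 else (\<lambda>s. 0)) (ell i) - Qm i \<bullet> (if i = k then w0 else (\<lambda>s. 0)) 0)
      = Qp k \<bullet> w0 (ell k) - Qm k \<bullet> w0 0"
    by (rule trans[OF sum_single[OF k]]) auto
  have s4: "(\<Sum>i<nE. integral {0..ell i} (if i = k then v0 else (\<lambda>s. 0))) = integral {0..ell k} v0"
    by (rule trans[OF sum_single[OF k]]) auto
  have s5: "(\<Sum>i<nE. integral {0..ell i} (if i = k then w0 else (\<lambda>s. 0))) = integral {0..ell k} w0"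
    by (rule trans[OF sum_single[OF k]]) auto
  show ?thesis
    unfolding b_form_def s1 s2 s3 s4 s5 by simp
qed

lemma b_vertexV:
  assumes j: "j < nV"
  shows "b_form nV nE src tgt ell Phi q p Pp Pm Qp Qm \<alpha> \<beta>
      (\<lambda>i s. 0) (\<lambda>i s. 0) (\<lambda>i s. 0) (\<lambda>i s. 0) (\<lambda>j'. if j' = j then e else 0) (\<lambda>j. 0)
   = - ((Aplus nE tgt Pp j - Aminus nE src Pm j) \<bullet> e)"
proof -
  have "(\<Sum>j'<nV. (Aplus nE tgt Pp j' - Aminus nE src Pm j') \<bullet> (if j' = j then e else 0))
      = (Aplus nE tgt Pp j - Aminus nE src Pm j) \<bullet> e"
    by (rule trans[OF sum_single[OF j]]) auto
  then show ?thesis unfolding b_form_def by simp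
qed

lemma b_vertexW:
  assumes j: "j < nV"
  shows "b_form nV nE src tgt ell Phi q p Pp Pm Qp Qm \<alpha> \<beta>
      (\<lambda>i s. 0) (\<lambda>i s. 0) (\<lambda>i s. 0) (\<lambda>i s. 0) (\<lambda>j. 0) (\<lambda>j'. if j' = j then e else 0)
   = - ((Aplus nE tgt Qp j - Aminus nE src Qm j) \<bullet> e)"
proof -
  have "(\<Sum>j'<nV. (Aplus nE tgt Qp j' - Aminus nE src Qm j') \<bullet> (if j' = j then e else 0))
      = (Aplus nE tgt Qp j - Aminus nE src Qm j) \<bullet> e"
    by (rule trans[OF sum_single[OF j]]) auto
  then show ?thesis unfolding b_form_def by simp
qed

lemma regroup:
  fixes nE nV :: nat and tg :: "nat \<Rightarrow> nat" and h :: "nat \<Rightarrow> nat \<Rightarrow> 'a::comm_monoid_add"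
  assumes "\<And>i. i < nE \<Longrightarrow> tg i < nV"
  shows "(\<Sum>j<nV. \<Sum>i | i < nE \<and> tg i = j. h i j) = (\<Sum>i<nE. h i (tg i))"
proof -
  have "(\<Sum>j<nV. \<Sum>i | i < nE \<and> tg i = j. h i j) = (\<Sum>j<nV. \<Sum>i<nE. if tg i = j then h i j else 0)"
  proof (rule sum.cong[OF refl])
    fix j
    have "{i. i < nE \<and> tg i = j} = {i \<in> {..<nE}. tg i = j}" by auto
    then show "(\<Sum>i | i < nE \<and> tg i = j. h i j) = (\<Sum>i<nE. if tg i = j then h i j else 0)"
      using sum.inter_filter[OF finite_lessThan[of nE], of "\<lambda>i. h i j" "\<lambda>i. tg i = j"] by simp
  qed
  also have "\<dots> = (\<Sum>i<nE. \<Sum>j<nV. if tg i = j then h i j else 0)" by (rule sum.swap)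
  also have "\<dots> = (\<Sum>i<nE. h i (tg i))"
    using assms by (intro sum.cong refl) (simp add: sum.delta)
  finally show ?thesis .
qed

lemma H1_zero: "H1_on l (\<lambda>s. 0) (\<lambda>s. 0)"
  by (simp add: H1_on_def L2_const)

lemma H1_const: "H1_on l (\<lambda>s. a) (\<lambda>s. 0)"
  by (simp add: H1_on_def L2_const)

lemma H1_int:
  assumes "L2_on l d"
  shows "H1_on l (\<lambda>s. integral {0..s} d) d"
  using assms by (simp add: H1_on_def)

lemma edge_of_smooth:
  assumes l: "0 < l" and sm: "smooth_on_interval l f"
    and nt: "\<And>s. s \<in> {0..l} \<Longrightarrow> norm (tangent f l s) = 1"
  shows "edge l f (tangent f l)"
proof -
  obtain D where D0: "D 0 = f" and DD: "\<And>k s. s \<in> {0..l} \<Longrightarrow> (D k has_vector_derivative D (Suc k) s) (at s within {0..l})"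
    using sm unfolding smooth_on_interval_def by blast
  have tD: "tangent f l s = D 1 s" if "s \<in> {0..l}" for s
    using vector_derivative_within_cbox[of 0 l s f "D 1 s"] l that DD[of s 0] D0
    by (simp add: tangent_def cbox_interval)
  show ?thesis
  proof
    show "0 < l" by (rule l)
    fix s assume s: "s \<in> {0..l}"
    show "(f has_vector_derivative tangent f l s) (at s within {0..l})"
      using DD[OF s, of 0] D0 tD[OF s] by simp
    show "norm (tangent f l s) = 1" by (rule nt[OF s])
  next
    have "continuous_on {0..l} (D 1)"
      by (rule continuous_on_vector_derivative[of _ _ "D 2"]) (use DD[of _ 1] in \<open>auto simp: numeral_2_eq_2\<close>)
    then show "continuous_on {0..l} (tangent f l)"
      by (rule continuous_on_eq) (simp add: tD)
  qed
qed

lemma H1_lin: "H1_on l (\<lambda>s. s *\<^sub>R e) (\<lambda>s. e)"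
  by (auto simp: H1_on_def L2_const)

lemma H1_clamp:
  assumes a: "0 \<le> a" "a \<le> b"
  shows "H1_on l (\<lambda>s. (min s b - min s a) *\<^sub>R e) (\<lambda>s. if s \<in> {a..b} then e else 0)"
  unfolding H1_on_def
proof (intro conjI ballI)
  have int: "(\<lambda>s. if s \<in> {a..b} then e else 0) integrable_on {0..l}"
    unfolding integrable_restrict_Int Int_atLeastAtMost by (rule integrable_const_ivl)
  show "L2_on l (\<lambda>s. if s \<in> {a..b} then e else 0)"
    by (rule L2_cont_bounded[OF int, of "norm e"]) auto
  fix s :: real assume s: "s \<in> {0..l}"
  have "integral {0..s} (\<lambda>r. if r \<in> {a..b} then e else 0) = integral ({a..b} \<inter> {0..s}) (\<lambda>r. e)"
    by (rule integral_restrict_Int)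
  also have "\<dots> = (min s b - min s a) *\<^sub>R e"
    using a s by (auto simp: min_def max_def)
  finally show "(min s b - min s a) *\<^sub>R e = (min 0 b - min 0 a) *\<^sub>R e + integral {0..s} (\<lambda>r. if r \<in> {a..b} then e else 0)"
    using a by simp
qed

lemma diag_inv:
  fixes H :: "real^3^3"
  assumes "pos_diag H"
  shows "matrix_inv H = (\<chi> i j. if i = j then 1 / H$i$i else 0)"
proof -
  define D :: "real^3^3" where "D = (\<chi> i j. if i = j then 1 / H$i$i else 0)"
  have Hd: "H$i$j = (if i = j then H$i$i else 0)" for i j using assms by (auto simp: pos_diag_def)
  have Hp: "H$i$i \<noteq> 0" for i
  proof -
    have "0 < H$i$i" using assms by (simp add: pos_diag_def)
    then show ?thesis by simp
  qed
  have HD: "H ** D = mat 1"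
  proof -
    have "(H ** D)$i$j = (if i = j then 1 else 0)" for i j
    proof -
      have "(H ** D)$i$j = (\<Sum>k\<in>UNIV. H$i$k * D$k$j)" by (simp add: matrix_matrix_mult_def)
      also have "\<dots> = (\<Sum>k\<in>UNIV. if k = i then H$i$i * D$i$j else 0)"
        by (intro sum.cong refl) (subst Hd, auto)
      also have "\<dots> = H$i$i * D$i$j" by simp
      also have "\<dots> = (if i = j then 1 else 0)" using Hp by (simp add: D_def)
      finally show ?thesis .
    qed
    then show ?thesis by (simp add: vec_eq_iff mat_def)
  qed
  have DH: "D ** H = mat 1"
  proof -
    have "(D ** H)$i$j = (if i = j then 1 else 0)" for i j
    proof -
      have "(D ** H)$i$j = (\<Sum>k\<in>UNIV. D$i$k * H$k$j)" by (simp add: matrix_matrix_mult_def)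
      also have "\<dots> = (\<Sum>k\<in>UNIV. if k = i then D$i$i * H$i$j else 0)"
        by (intro sum.cong refl) (auto simp: D_def)
      also have "\<dots> = D$i$i * H$i$j" by simp
      also have "\<dots> = (if i = j then 1 else 0)" using Hp Hd[of i j] by (simp add: D_def)
      finally show ?thesis .
    qed
    then show ?thesis by (simp add: vec_eq_iff mat_def)
  qed
  have M: "H ** matrix_inv H = mat 1 \<and> matrix_inv H ** H = mat 1"
    unfolding matrix_inv_def by (rule someI[of _ D]) (simp add: HD DH)
  have "D = D ** (H ** matrix_inv H)" using M by simp
  also have "\<dots> = matrix_inv H" by (simp add: matrix_mul_assoc DH)
  finally show ?thesis by (simp add: D_def)
qed

lemma quad_form:
  fixes Q H :: "real^3^3" and x :: "real^3"
  assumes "pos_diag H"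
  shows "((Q ** matrix_inv H ** transpose Q) *v x) \<bullet> x = (\<Sum>a\<in>UNIV. (1 / H$a$a) * ((\<chi> b. Q$b$a) \<bullet> x)^2)"
proof -
  define y where "y = transpose Q *v x"
  have ya: "y$a = (\<chi> b. Q$b$a) \<bullet> x" for a
    by (simp add: y_def matrix_vector_mult_def inner_vec_def transpose_def)
  have "((Q ** matrix_inv H ** transpose Q) *v x) = Q *v (matrix_inv H *v y)"
    by (simp only: y_def matrix_vector_mul_assoc matrix_mul_assoc)
  then have "((Q ** matrix_inv H ** transpose Q) *v x) \<bullet> x = (matrix_inv H *v y) \<bullet> y"
    by (metis dot_lmul_matrix vector_transpose_matrix y_def)
  also have "\<dots> = (\<Sum>a\<in>UNIV. (1 / H$a$a) * (y$a)^2)"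
  proof -
    have "(matrix_inv H *v y)$a = (1 / H$a$a) * y$a" for a
    proof -
      have "(matrix_inv H *v y)$a = (\<Sum>k\<in>UNIV. (if a = k then 1 / H$a$a else 0) * y$k)"
        by (simp add: diag_inv[OF assms] matrix_vector_mult_def)
      also have "\<dots> = (\<Sum>k\<in>UNIV. if k = a then (1 / H$a$a) * y$a else 0)"
        by (intro sum.cong) auto
      finally show ?thesis by simp
    qed
    then show ?thesis by (simp add: inner_vec_def power2_eq_square mult.assoc)
  qed
  finally show ?thesis by (simp add: ya)
qed

lemma orth_norm:
  fixes Q :: "real^3^3"
  assumes "orthogonal_matrix Q"
  shows "(\<Sum>a\<in>UNIV. ((\<chi> b. Q$b$a) \<bullet> x)^2) = norm x ^ 2"
proof -
  define y where "y = transpose Q *v x"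
  have ya: "y$a = (\<chi> b. Q$b$a) \<bullet> x" for a
    by (simp add: y_def matrix_vector_mult_def inner_vec_def transpose_def)
  have "y \<bullet> y = x \<bullet> (Q *v y)"
    by (metis dot_lmul_matrix vector_transpose_matrix y_def inner_commute)
  also have "Q *v y = x" using assms unfolding orthogonal_matrix_def
    by (simp only: y_def matrix_vector_mul_assoc) simp
  finally have yy: "y \<bullet> y = x \<bullet> x" .
  have "(\<Sum>a\<in>UNIV. ((\<chi> b. Q$b$a) \<bullet> x)^2) = (\<Sum>a\<in>UNIV. (y$a)^2)" by (simp only: ya)
  also have "\<dots> = y \<bullet> y" by (simp add: inner_vec_def power2_eq_square)
  also have "\<dots> = norm x ^ 2" by (simp add: yy power2_norm_eq_inner)
  finally show ?thesis .
qed

lemma a_edge_lower: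
  fixes Qm :: "real \<Rightarrow> real^3^3" and H :: "real^3^3" and q :: "real \<Rightarrow> real^3"
  assumes Qc: "continuous_on {0..l} Qm" and Qo: "\<And>s. s \<in> {0..l} \<Longrightarrow> orthogonal_matrix (Qm s)"
    and Hd: "pos_diag H" and q: "L2_on l q" and lam: "0 < lam" and lamH: "\<And>a. lam * H$a$a \<le> 1"
  shows "lam * integral {0..l} (\<lambda>s. norm (q s)^2) \<le> integral {0..l} (\<lambda>s. ((Qm s ** matrix_inv H ** transpose (Qm s)) *v q s) \<bullet> q s)"
proof -
  define F where "F s = (\<Sum>a\<in>UNIV. (1 / H$a$a) * ((\<chi> b. Qm s$b$a) \<bullet> q s)^2)" for s
  define \<Lambda> where "\<Lambda> = (\<Sum>a\<in>UNIV. 1 / H$a$a)"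
  have hpos: "0 < H$a$a" for a using Hd by (simp add: pos_diag_def)
  have eqF: "((Qm s ** matrix_inv H ** transpose (Qm s)) *v q s) \<bullet> q s = F s" for s
    unfolding F_def by (rule quad_form[OF Hd])
  have meas: "F measurable_on {0..l}"
    unfolding F_def
  proof (rule measurable_on_sum)
    show "finite (UNIV :: 3 set)" by simp
    fix a :: 3
    show "(\<lambda>s. 1 / H$a$a * ((\<chi> b. Qm s$b$a) \<bullet> q s)^2) measurable_on {0..l}"
    proof (rule measurable_on_cmul)
    have col: "(\<lambda>s. (\<chi> b. Qm s$b$a) \<bullet> q s) measurable_on {0..l}"
      by (intro inner_meas cont_meas L2_meas[OF q] continuous_intros Qc)
    show "(\<lambda>s. ((\<chi> b. Qm s$b$a) \<bullet> q s)^2) measurable_on {0..l}"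
      using measurable_on_scaleR[OF col col] by (simp add: power2_eq_square)
    qed
  qed
  have Fup: "norm (F s) \<le> \<Lambda> * norm (q s)^2" if s: "s \<in> {0..l}" for s
  proof -
    have F0: "0 \<le> F s" unfolding F_def using hpos by (intro sum_nonneg) (simp add: less_imp_le)
    have "F s \<le> (\<Sum>a\<in>UNIV. (1 / H$a$a) * norm (q s)^2)"
      unfolding F_def
    proof (intro sum_mono mult_left_mono)
      fix a :: 3
      have "((\<chi> b. Qm s$b$a) \<bullet> q s)^2 \<le> (\<Sum>a\<in>UNIV. ((\<chi> b. Qm s$b$a) \<bullet> q s)^2)"
        by (intro member_le_sum) auto
      then show "((\<chi> b. Qm s$b$a) \<bullet> q s)^2 \<le> norm (q s)^2" using orth_norm[OF Qo[OF s]] by simp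
      show "0 \<le> 1 / H$a$a" using hpos[of a] by simp
    qed
    also have "\<dots> = \<Lambda> * norm (q s)^2" by (simp add: \<Lambda>_def sum_distrib_right)
    finally show ?thesis using F0 by simp
  qed
  have intq: "(\<lambda>s. norm (q s)^2) integrable_on {0..l}" by (rule L2_sq_integrable[OF q])
  have intF: "F integrable_on {0..l}"
    by (rule meas_bound_int[OF meas integrable_on_mult_right[OF intq, of \<Lambda>]]) (use Fup in auto)
  have Flow: "lam * norm (q s)^2 \<le> F s" if s: "s \<in> {0..l}" for s
  proof -
    have "lam * norm (q s)^2 = (\<Sum>a\<in>UNIV. lam * ((\<chi> b. Qm s$b$a) \<bullet> q s)^2)"
      by (subst orth_norm[OF Qo[OF s], of "q s", symmetric]) (simp add: sum_distrib_left)
    also have "\<dots> \<le> F s"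
      unfolding F_def
    proof (intro sum_mono mult_right_mono)
      fix a :: 3
      show "lam \<le> 1 / H$a$a" using lamH[of a] hpos[of a] by (simp add: field_simps)
    qed simp
    finally show ?thesis .
  qed
  have "lam * integral {0..l} (\<lambda>s. norm (q s)^2) = integral {0..l} (\<lambda>s. lam * norm (q s)^2)"
    by (simp add: integral_mult_right)
  also have "\<dots> \<le> integral {0..l} F"
    by (rule integral_le[OF integrable_on_mult_right[OF intq] intF Flow])
  also have "\<dots> = integral {0..l} (\<lambda>s. ((Qm s ** matrix_inv H ** transpose (Qm s)) *v q s) \<bullet> q s)"
    by (simp add: eqF)
  finally show ?thesis .
qed

definition edgeF where
  "edgeF l t p q Pp Pm Qp Qm \<alpha> \<beta> v dv w dw =
     integral {0..l} (\<lambda>s. - (p s \<bullet> (dv s + cross3 (t s) (w s))) - q s \<bullet> dw s)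
     + (Pp \<bullet> v l - Pm \<bullet> v 0) + (Qp \<bullet> w l - Qm \<bullet> w 0)
     + \<alpha> \<bullet> integral {0..l} v + \<beta> \<bullet> integral {0..l} w"

lemma inner_all_zero: "(\<And>e. x \<bullet> e = 0) \<Longrightarrow> x = (0::real^3)"
  by (metis inner_eq_zero_iff)

lemma integral_inner_const:
  assumes "f integrable_on S"
  shows "c \<bullet> integral S f = integral S (\<lambda>s. c \<bullet> f s)"
  using integral_linear[OF assms bounded_linear_inner_right[of c]] by (simp add: comp_def)

locale kedge = edge +
  fixes p q :: "real \<Rightarrow> real^3" and Pp Pm Qp Qm \<alpha> \<beta> :: "real^3"
  assumes p: "L2_on l p" and q: "L2_on l q"
    and KE: "\<And>v dv w dw. H1_on l v dv \<Longrightarrow> H1_on l w dw \<Longrightarrow> edgeF l t p q Pp Pm Qp Qm \<alpha> \<beta> v dv w dw = 0"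
begin

lemma E1: "Pp - Pm + l *\<^sub>R \<alpha> = 0"
proof (rule inner_all_zero)
  fix e
  have "edgeF l t p q Pp Pm Qp Qm \<alpha> \<beta> (\<lambda>s. e) (\<lambda>s. 0) (\<lambda>s. 0) (\<lambda>s. 0) = 0"
    by (rule KE[OF H1_const H1_zero])
  then show "(Pp - Pm + l *\<^sub>R \<alpha>) \<bullet> e = 0"
    using lpos by (simp add: edgeF_def inner_diff_left inner_add_left)
qed

context
  assumes a0: "\<alpha> = 0" and PP: "Pm = Pp"
begin

lemma E2: "integral {0..l} (\<lambda>s. p s \<bullet> e) = l * (Pp \<bullet> e)"
proof -
  have "edgeF l t p q Pp Pm Qp Qm \<alpha> \<beta> (\<lambda>s. s *\<^sub>R e) (\<lambda>s. e) (\<lambda>s. 0) (\<lambda>s. 0) = 0"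
    by (rule KE[OF H1_lin H1_zero])
  then show ?thesis by (simp add: edgeF_def a0)
qed

lemma E3: "integral {0..l} (\<lambda>s. norm (p s - Pp)^2) = 0 \<and> integral {0..l} (\<lambda>s. norm (p s)^2) = l * norm Pp ^ 2"
proof -
  have d: "L2_on l (\<lambda>s. p s - Pp)" by (rule L2_diff[OF p L2_const])
  have pi: "p integrable_on {0..l}" by (rule L2_integrable[OF p])
  have di: "(\<lambda>s. p s - Pp) integrable_on {0..l}" by (rule L2_integrable[OF d])
  have "edgeF l t p q Pp Pm Qp Qm \<alpha> \<beta> (\<lambda>s. integral {0..s} (\<lambda>s. p s - Pp)) (\<lambda>s. p s - Pp) (\<lambda>s. 0) (\<lambda>s. 0) = 0"
    by (rule KE[OF H1_int[OF d] H1_zero])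
  then have e1: "- integral {0..l} (\<lambda>s. p s \<bullet> (p s - Pp)) + Pp \<bullet> integral {0..l} (\<lambda>s. p s - Pp) = 0"
    by (simp add: edgeF_def a0 PP)
  have i1: "(\<lambda>s. p s \<bullet> (p s - Pp)) integrable_on {0..l}" by (rule L2_inner_integrable[OF p d])
  have i2: "(\<lambda>s. p s \<bullet> Pp) integrable_on {0..l}" by (rule L2_inner_integrable[OF p L2_const])
  have i3: "(\<lambda>s. Pp \<bullet> p s) integrable_on {0..l}" by (rule L2_inner_integrable[OF L2_const p])
  have pP: "integral {0..l} (\<lambda>s. p s \<bullet> Pp) = l * (Pp \<bullet> Pp)" using E2[of Pp] .
  have "Pp \<bullet> integral {0..l} (\<lambda>s. p s - Pp) = integral {0..l} (\<lambda>s. Pp \<bullet> (p s - Pp))"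
    by (rule integral_inner_const[OF di])
  also have "\<dots> = integral {0..l} (\<lambda>s. Pp \<bullet> p s - Pp \<bullet> Pp)" by (simp add: inner_diff_right)
  also have "\<dots> = integral {0..l} (\<lambda>s. Pp \<bullet> p s) - integral {0..l} (\<lambda>s. Pp \<bullet> Pp)"
    by (rule integral_diff[OF i3 integrable_const_ivl])
  also have "\<dots> = 0" using pP lpos by (simp add: inner_commute)
  finally have z1: "Pp \<bullet> integral {0..l} (\<lambda>s. p s - Pp) = 0" .
  with e1 have z2: "integral {0..l} (\<lambda>s. p s \<bullet> (p s - Pp)) = 0" by simp
  have "integral {0..l} (\<lambda>s. norm (p s - Pp)^2) = integral {0..l} (\<lambda>s. p s \<bullet> (p s - Pp) - Pp \<bullet> (p s - Pp))"
    by (simp add: power2_norm_eq_inner inner_diff_left)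
  also have "\<dots> = integral {0..l} (\<lambda>s. p s \<bullet> (p s - Pp)) - integral {0..l} (\<lambda>s. Pp \<bullet> (p s - Pp))"
    by (rule integral_diff[OF i1 L2_inner_integrable[OF L2_const d]])
  also have "\<dots> = 0" using z1 z2 integral_inner_const[OF di, of Pp] by simp
  finally have r1: "integral {0..l} (\<lambda>s. norm (p s - Pp)^2) = 0" .
  have "integral {0..l} (\<lambda>s. norm (p s)^2) = integral {0..l} (\<lambda>s. p s \<bullet> (p s - Pp) + p s \<bullet> Pp)"
    by (simp add: power2_norm_eq_inner inner_diff_right)
  also have "\<dots> = integral {0..l} (\<lambda>s. p s \<bullet> (p s - Pp)) + integral {0..l} (\<lambda>s. p s \<bullet> Pp)"
    by (rule integral_add[OF i1 i2])
  also have "\<dots> = l * norm Pp ^ 2" using z2 pP by (simp add: power2_norm_eq_inner)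
  finally show ?thesis using r1 by simp
qed

lemma E4:
  assumes h: "L2_on l h"
  shows "integral {0..l} (\<lambda>s. p s \<bullet> h s) = integral {0..l} (\<lambda>s. Pp \<bullet> h s)"
proof -
  have d: "L2_on l (\<lambda>s. p s - Pp)" by (rule L2_diff[OF p L2_const])
  have "integral {0..l} (\<lambda>s. (p s - Pp) \<bullet> h s) = 0"
    by (rule ortho_zero[OF d h]) (use E3 in simp)
  moreover have "integral {0..l} (\<lambda>s. (p s - Pp) \<bullet> h s) = integral {0..l} (\<lambda>s. p s \<bullet> h s) - integral {0..l} (\<lambda>s. Pp \<bullet> h s)"
    unfolding inner_diff_left
    by (rule integral_diff[OF L2_inner_integrable[OF p h] L2_inner_integrable[OF L2_const h]])
  ultimately show ?thesis by simp
qed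

lemma cross_e_integral:
  "integral {0..l} (\<lambda>s. Pp \<bullet> cross3 (t s) e) = cross3 Pp (Phi l - Phi 0) \<bullet> e"
proof -
  have "(t has_integral (Phi l - Phi 0)) {0..l}" using ftc[of 0 l] lpos by simp
  from has_integral_linear[OF this bl_cross_left[of e]]
  have "((\<lambda>s. cross3 (t s) e) has_integral cross3 (Phi l - Phi 0) e) {0..l}" by (simp add: comp_def)
  from has_integral_linear[OF this bounded_linear_inner_right[of Pp]]
  have "((\<lambda>s. Pp \<bullet> cross3 (t s) e) has_integral Pp \<bullet> cross3 (Phi l - Phi 0) e) {0..l}" by (simp add: comp_def)
  then have "integral {0..l} (\<lambda>s. Pp \<bullet> cross3 (t s) e) = Pp \<bullet> cross3 (Phi l - Phi 0) e"
    by (rule integral_unique)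
  also have "\<dots> = cross3 Pp (Phi l - Phi 0) \<bullet> e"
    by (metis cross_triple inner_commute)
  finally show ?thesis .
qed

lemma E5: "Qp - Qm = cross3 Pp (Phi l - Phi 0) - l *\<^sub>R \<beta>"
proof -
  have "Qp - Qm - cross3 Pp (Phi l - Phi 0) + l *\<^sub>R \<beta> = 0"
  proof (rule inner_all_zero)
    fix e
    have "edgeF l t p q Pp Pm Qp Qm \<alpha> \<beta> (\<lambda>s. 0) (\<lambda>s. 0) (\<lambda>s. e) (\<lambda>s. 0) = 0"
      by (rule KE[OF H1_zero H1_const])
    then have "- integral {0..l} (\<lambda>s. p s \<bullet> cross3 (t s) e) + (Qp \<bullet> e - Qm \<bullet> e) + \<beta> \<bullet> (l *\<^sub>R e) = 0"
      using lpos by (simp add: edgeF_def)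
    moreover have "integral {0..l} (\<lambda>s. p s \<bullet> cross3 (t s) e) = cross3 Pp (Phi l - Phi 0) \<bullet> e"
      using E4[OF L2_cont[OF continuous_on_cross[OF tcont continuous_on_const]]] cross_e_integral by simp
    ultimately show "(Qp - Qm - cross3 Pp (Phi l - Phi 0) + l *\<^sub>R \<beta>) \<bullet> e = 0"
      by (simp add: inner_diff_left inner_add_left)
  qed
  then show ?thesis by (simp add: algebra_simps)
qed

end

end

context kedge
begin

lemma cross_e_integral_gen:
  assumes "0 \<le> x" "x \<le> y" "y \<le> l"
  shows "integral {x..y} (\<lambda>s. P \<bullet> cross3 (t s) e) = cross3 P (Phi y - Phi x) \<bullet> e"
proof -
  have "(t has_integral (Phi y - Phi x)) {x..y}" using ftc[OF assms] .
  from has_integral_linear[OF this bl_cross_left[of e]]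
  have "((\<lambda>s. cross3 (t s) e) has_integral cross3 (Phi y - Phi x) e) {x..y}" by (simp add: comp_def)
  from has_integral_linear[OF this bounded_linear_inner_right[of P]]
  have "((\<lambda>s. P \<bullet> cross3 (t s) e) has_integral P \<bullet> cross3 (Phi y - Phi x) e) {x..y}" by (simp add: comp_def)
  then have "integral {x..y} (\<lambda>s. P \<bullet> cross3 (t s) e) = P \<bullet> cross3 (Phi y - Phi x) e"
    by (rule integral_unique)
  also have "\<dots> = cross3 P (Phi y - Phi x) \<bullet> e"
    by (metis cross_triple inner_commute)
  finally show ?thesis .
qed

lemma qe_sq_integrable:
  "(\<lambda>s. (q s \<bullet> e)^2) integrable_on {0..l}" if "norm e = 1"
proof (rule meas_bound_int)
  have m: "(\<lambda>s. q s \<bullet> e) measurable_on {0..l}"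
    by (intro inner_meas L2_meas[OF q] cont_meas continuous_on_const)
  show "(\<lambda>s. (q s \<bullet> e)^2) measurable_on {0..l}"
    using measurable_on_scaleR[OF m m] by (simp add: power2_eq_square)
  show "(\<lambda>s. norm (q s)^2) integrable_on {0..l}" by (rule L2_sq_integrable[OF q])
  fix s
  have "\<bar>q s \<bullet> e\<bar> \<le> norm (q s)" using Cauchy_Schwarz_ineq2[of "q s" e] that by simp
  then show "norm ((q s \<bullet> e)^2) \<le> norm (q s)^2"
    by (simp add: power2_le_iff_abs_le abs_le_square_iff)
qed

lemma E6:
  assumes a0: "\<alpha> = 0" and PP: "Pm = Pp" and b0: "\<beta> = 0"
    and ab: "0 \<le> a" "a < b" "b \<le> l"
    and cond: "(b - a) * Lfun l t Pp \<le> norm (Qp - cross3 Pp (Phi l - Phi b))"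
  shows "(b - a) * (norm (Qp - cross3 Pp (Phi l - Phi b)) - (b - a) * Lfun l t Pp)^2
           \<le> integral {0..l} (\<lambda>s. norm (q s)^2)"
proof -
  define G where "G = Qp - cross3 Pp (Phi l - Phi b)"
  define L where "L = Lfun l t Pp"
  define N where "N = integral {0..l} (\<lambda>s. norm (q s)^2)"
  have N0: "0 \<le> N" unfolding N_def by (rule integral_nonneg[OF L2_sq_integrable[OF q]]) simp
  have L0: "0 \<le> L" by (simp add: L_def Lfun_def)
  have ba: "0 < b - a" using ab by simp
  show ?thesis
  proof (cases "G = 0")
    case True
    then have "(b - a) * L \<le> 0" using cond by (simp add: G_def L_def)
    then have "L = 0" using ba L0 by (simp add: mult_le_0_iff)
    then show ?thesis using True N0 by (simp add: G_def L_def N_def)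
  next
    case False
    define e where "e = (1 / norm G) *\<^sub>R G"
    have ne: "norm e = 1" using False by (simp add: e_def)
    have Ge: "G \<bullet> e = norm G" using False by (simp add: e_def power2_norm_eq_inner[symmetric] power2_eq_square)
    define w0 where "w0 s = (min s b - min s a) *\<^sub>R e" for s
    define dw0 where "dw0 s = (if s \<in> {a..b} then e else 0)" for s
    have H1w: "H1_on l w0 dw0" unfolding w0_def dw0_def by (rule H1_clamp) (use ab in auto)
    have L2dw: "L2_on l dw0" using H1w by (simp add: H1_on_def)
    have w00: "w0 0 = 0" using ab by (simp add: w0_def)
    have w0l: "w0 l = (b - a) *\<^sub>R e" using ab by (simp add: w0_def)
    define h where "h s = cross3 (t s) (w0 s)" for s
    have hc: "continuous_on {0..l} h" unfolding h_def w0_def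
      by (intro continuous_on_cross tcont continuous_intros)
    have L2h: "L2_on l h" by (rule L2_cont[OF hc])
    have iX: "(\<lambda>s. p s \<bullet> h s) integrable_on {0..l}" by (rule L2_inner_integrable[OF p L2h])
    have iY: "(\<lambda>s. q s \<bullet> dw0 s) integrable_on {0..l}" by (rule L2_inner_integrable[OF q L2dw])
    have "edgeF l t p q Pp Pm Qp Qm \<alpha> \<beta> (\<lambda>s. 0) (\<lambda>s. 0) w0 dw0 = 0"
      by (rule KE[OF H1_zero H1w])
    then have "integral {0..l} (\<lambda>s. - (p s \<bullet> h s) - q s \<bullet> dw0 s) + (Qp \<bullet> w0 l - Qm \<bullet> w0 0) = 0"
      by (simp add: edgeF_def a0 b0 h_def)
    moreover have "integral {0..l} (\<lambda>s. - (p s \<bullet> h s) - q s \<bullet> dw0 s)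
        = - integral {0..l} (\<lambda>s. p s \<bullet> h s) - integral {0..l} (\<lambda>s. q s \<bullet> dw0 s)"
      using integral_diff[OF integrable_neg[OF iX] iY] by simp
    ultimately have eq1: "integral {0..l} (\<lambda>s. q s \<bullet> dw0 s) = (b - a) * (Qp \<bullet> e) - integral {0..l} (\<lambda>s. p s \<bullet> h s)"
      using w00 w0l by simp
    have "integral {0..l} (\<lambda>s. q s \<bullet> dw0 s) = integral {0..l} (\<lambda>s. if s \<in> {a..b} then q s \<bullet> e else 0)"
      by (intro integral_cong) (simp add: dw0_def)
    also have "\<dots> = integral ({a..b} \<inter> {0..l}) (\<lambda>s. q s \<bullet> e)" by (rule integral_restrict_Int)
    also have "{a..b} \<inter> {0..l} = {a..b}" using ab by auto
    finally have Iq: "integral {0..l} (\<lambda>s. q s \<bullet> dw0 s) = integral {a..b} (\<lambda>s. q s \<bullet> e)" .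
    define \<phi> where "\<phi> s = Pp \<bullet> cross3 (t s) e" for s
    define m where "m s = min s b - min s a" for s
    have ph: "Pp \<bullet> h s = m s * \<phi> s" for s
      by (simp add: h_def w0_def \<phi>_def m_def cross_mult_right)
    have pX: "integral {0..l} (\<lambda>s. p s \<bullet> h s) = integral {0..l} (\<lambda>s. m s * \<phi> s)"
      using E4[OF a0 PP L2h] ph by simp
    have mc: "continuous_on {0..l} (\<lambda>s. m s * \<phi> s)" unfolding m_def \<phi>_def
      by (intro continuous_intros continuous_on_cross tcont)
    have imp: "(\<lambda>s. m s * \<phi> s) integrable_on {0..l}" by (rule integrable_continuous_interval[OF mc])
    have imp_b: "(\<lambda>s. m s * \<phi> s) integrable_on {0..b}"
      by (rule integrable_subinterval_real[OF imp]) (use ab in auto)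
    have imp_ab: "(\<lambda>s. m s * \<phi> s) integrable_on {a..b}"
      by (rule integrable_subinterval_real[OF imp]) (use ab in auto)
    have s1: "integral {0..l} (\<lambda>s. m s * \<phi> s) = integral {0..b} (\<lambda>s. m s * \<phi> s) + integral {b..l} (\<lambda>s. m s * \<phi> s)"
      using Henstock_Kurzweil_Integration.integral_combine[where a=0 and c=b and b=l, OF _ _ imp] ab by simp
    have s2: "integral {0..b} (\<lambda>s. m s * \<phi> s) = integral {0..a} (\<lambda>s. m s * \<phi> s) + integral {a..b} (\<lambda>s. m s * \<phi> s)"
      using Henstock_Kurzweil_Integration.integral_combine[where a=0 and c=a and b=b, OF _ _ imp_b] ab by simp
    have z0: "integral {0..a} (\<lambda>s. m s * \<phi> s) = 0"
    proof -
      have "integral {0..a} (\<lambda>s. m s * \<phi> s) = integral {0..a} (\<lambda>s. 0::real)"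
        by (intro integral_cong) (use ab in \<open>auto simp: m_def\<close>)
      then show ?thesis by simp
    qed
    have zb: "integral {b..l} (\<lambda>s. m s * \<phi> s) = (b - a) * (cross3 Pp (Phi l - Phi b) \<bullet> e)"
    proof -
      have "integral {b..l} (\<lambda>s. m s * \<phi> s) = integral {b..l} (\<lambda>s. (b - a) * \<phi> s)"
        by (intro integral_cong) (use ab in \<open>auto simp: m_def\<close>)
      also have "\<dots> = (b - a) * integral {b..l} \<phi>" by (simp add: integral_mult_right)
      also have "integral {b..l} \<phi> = cross3 Pp (Phi l - Phi b) \<bullet> e"
        unfolding \<phi>_def by (rule cross_e_integral_gen) (use ab in auto)
      finally show ?thesis .
    qed
    define R where "R = integral {a..b} (\<lambda>s. m s * \<phi> s)"
    have Rb: "\<bar>R\<bar> \<le> (b - a) * L * (b - a)"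
    proof -
      have bnd: "norm (m s * \<phi> s) \<le> (b - a) * L" if s: "s \<in> cbox a b" for s
      proof -
        have s': "s \<in> {0..l}" using s ab by auto
        have m1: "\<bar>m s\<bar> \<le> b - a" using s ab by (auto simp: m_def min_def)
        have "\<bar>\<phi> s\<bar> = \<bar>cross3 Pp (t s) \<bullet> e\<bar>" by (metis \<phi>_def cross_triple inner_commute)
        also have "\<dots> \<le> norm (cross3 Pp (t s)) * norm e" by (rule Cauchy_Schwarz_ineq2)
        also have "\<dots> \<le> L" using Lf_bound[OF s', of Pp] ne by (simp add: L_def)
        finally have "\<bar>\<phi> s\<bar> \<le> L" .
        then have "\<bar>m s\<bar> * \<bar>\<phi> s\<bar> \<le> (b - a) * L" using m1 L0 by (intro mult_mono) auto
        then show ?thesis by (simp add: abs_mult)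
      qed
      have "norm R \<le> (b - a) * L * Henstock_Kurzweil_Integration.content (cbox a b)"
        unfolding R_def
        by (rule has_integral_bound[OF _ _ bnd]) (use ba L0 imp_ab in \<open>auto simp: cbox_interval\<close>)
      then show ?thesis using ab by simp
    qed
    have Iform: "integral {a..b} (\<lambda>s. q s \<bullet> e) = (b - a) * norm G - R"
    proof -
      have "integral {a..b} (\<lambda>s. q s \<bullet> e) = (b - a) * (Qp \<bullet> e) - (R + (b - a) * (cross3 Pp (Phi l - Phi b) \<bullet> e))"
        using eq1 Iq pX s1 s2 z0 zb by (simp add: R_def)
      also have "\<dots> = (b - a) * (G \<bullet> e) - R" by (simp add: G_def inner_diff_left algebra_simps)
      finally show ?thesis using Ge by simp
    qed
    define I where "I = integral {a..b} (\<lambda>s. q s \<bullet> e)"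
    have Ilow: "(b - a) * (norm G - (b - a) * L) \<le> I"
      using Iform Rb by (simp add: I_def algebra_simps)
    have Ipos: "0 \<le> (b - a) * (norm G - (b - a) * L)"
      using cond ba by (simp add: G_def L_def)
    have iqe: "(\<lambda>s. q s \<bullet> e) integrable_on {a..b}"
      by (rule integrable_subinterval_real[OF L2_inner_integrable[OF q L2_const]]) (use ab in auto)
    have iqe2: "(\<lambda>s. (q s \<bullet> e)^2) integrable_on {a..b}"
      by (rule integrable_subinterval_real[OF qe_sq_integrable[OF ne]]) (use ab in auto)
    have iq2: "(\<lambda>s. norm (q s)^2) integrable_on {a..b}"
      by (rule integrable_subinterval_real[OF L2_sq_integrable[OF q]]) (use ab in auto)
    have "I^2 \<le> (b - a) * integral {a..b} (\<lambda>s. (q s \<bullet> e)^2)"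
      unfolding I_def by (rule CS_scalar[OF ab(2) iqe iqe2])
    also have "integral {a..b} (\<lambda>s. (q s \<bullet> e)^2) \<le> integral {a..b} (\<lambda>s. norm (q s)^2)"
    proof (rule integral_le[OF iqe2 iq2])
      fix s
      have "\<bar>q s \<bullet> e\<bar> \<le> norm (q s)" using Cauchy_Schwarz_ineq2[of "q s" e] ne by simp
      then show "(q s \<bullet> e)^2 \<le> norm (q s)^2" by (metis abs_le_square_iff abs_norm_cancel)
    qed
    also have "integral {a..b} (\<lambda>s. norm (q s)^2) \<le> N"
      unfolding N_def
      by (rule integral_subset_le[OF _ iq2 L2_sq_integrable[OF q]]) (use ab in auto)
    finally have "I^2 \<le> (b - a) * N" using ba by (simp add: mult_left_mono)
    moreover have "((b - a) * (norm G - (b - a) * L))^2 \<le> I^2"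
      using Ilow Ipos by (intro power_mono) auto
    ultimately have "(b - a) * ((b - a) * (norm G - (b - a) * L)^2) \<le> (b - a) * N"
      by (simp add: power_mult_distrib power2_eq_square algebra_simps)
    then have "(b - a) * (norm G - (b - a) * L)^2 \<le> N" using ba by simp
    then show ?thesis by (simp add: G_def L_def N_def)
  qed
qed

end

lemma Aplus_alt: "Aplus nE tgt X j = (\<Sum>i<nE. if tgt i = j then X i else 0)"
proof -
  have "{i. i < nE \<and> tgt i = j} = {i \<in> {..<nE}. tgt i = j}" by auto
  then show ?thesis
    unfolding Aplus_def using sum.inter_filter[OF finite_lessThan[of nE], of X "\<lambda>i. tgt i = j"] by simp
qed

lemma Aminus_alt: "Aminus nE src X j = (\<Sum>i<nE. if src i = j then X i else 0)"
  using Aplus_alt[of nE src X j] by (simp add: Aplus_def Aminus_def)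

lemma Aplus_add: "Aplus nE tgt (\<lambda>i. X i + Y i) j = Aplus nE tgt X j + Aplus nE tgt Y j"
  by (simp add: Aplus_def sum.distrib)

lemma Aminus_add: "Aminus nE src (\<lambda>i. X i + Y i) j = Aminus nE src X j + Aminus nE src Y j"
  by (simp add: Aminus_def sum.distrib)

lemma Aplus_norm: "norm (Aplus nE tgt X j) \<le> (\<Sum>i<nE. norm (X i))"
proof -
  have "norm (Aplus nE tgt X j) \<le> (\<Sum>i | i < nE \<and> tgt i = j. norm (X i))"
    unfolding Aplus_def by (rule norm_sum)
  also have "\<dots> \<le> (\<Sum>i<nE. norm (X i))"
    by (rule sum_mono2) auto
  finally show ?thesis .
qed

lemma Aminus_norm: "norm (Aminus nE src X j) \<le> (\<Sum>i<nE. norm (X i))"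
  using Aplus_norm[of nE src X j] by (simp add: Aplus_def Aminus_def)

lemma sum_vertex:
  assumes "\<And>i. i < nE \<Longrightarrow> tgt i < nV"
  shows "(\<Sum>j<nV. Aplus nE tgt X j) = (\<Sum>i<nE. X i)"
  unfolding Aplus_def using regroup[of nE tgt nV "\<lambda>i j. X i"] assms by simp

lemma cross_vertex:
  assumes "\<And>i. i < nE \<Longrightarrow> tgt i < nV"
  shows "(\<Sum>j<nV. cross3 (Aplus nE tgt X j) (V j)) = (\<Sum>i<nE. cross3 (X i) (V (tgt i)))"
proof -
  have lin: "linear (\<lambda>x. cross3 x v)" for v using bl_cross_left bounded_linear.linear by blast
  have "(\<Sum>j<nV. cross3 (Aplus nE tgt X j) (V j)) = (\<Sum>j<nV. \<Sum>i | i < nE \<and> tgt i = j. cross3 (X i) (V j))"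
    unfolding Aplus_def by (intro sum.cong refl) (simp add: linear_sum[OF lin] comp_def)
  also have "\<dots> = (\<Sum>i<nE. cross3 (X i) (V (tgt i)))"
    by (rule regroup[of nE tgt nV "\<lambda>i j. cross3 (X i) (V j)"]) (use assms in auto)
  finally show ?thesis .
qed

lemma perp_norm:
  fixes P u :: "real^3"
  assumes "norm u = 1"
  shows "norm (P - (P \<bullet> u) *\<^sub>R u) = norm (cross3 P u)"
proof -
  have uu: "u \<bullet> u = 1" using assms by (simp add: power2_norm_eq_inner[symmetric])
  have "norm (P - (P \<bullet> u) *\<^sub>R u)^2 = norm P ^ 2 - (P \<bullet> u)^2"
    by (simp only: power2_norm_eq_inner) (simp add: inner_diff_left inner_diff_right uu inner_commute power2_eq_square algebra_simps)
  also have "\<dots> = norm (cross3 P u)^2" using norm_cross[of P u] assms by simp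
  finally show ?thesis by (simp add: power2_eq_iff_nonneg)
qed

definition efin :: "real \<Rightarrow> (real \<Rightarrow> real^3) \<Rightarrow> (real \<Rightarrow> real^3) \<Rightarrow> real \<Rightarrow> bool" where
  "efin l Phi t C \<longleftrightarrow> C > 0 \<and> (\<forall>P Qp N. (\<forall>a b. 0 \<le> a \<longrightarrow> a < b \<longrightarrow> b \<le> l \<longrightarrow>
        (b - a) * Lfun l t P \<le> norm (Qp - cross3 P (Phi l - Phi b)) \<longrightarrow>
        (b - a) * (norm (Qp - cross3 P (Phi l - Phi b)) - (b - a) * Lfun l t P)^2 \<le> N)
     \<longrightarrow> (Lfun l t P)^2 \<le> C * N \<and> (norm Qp)^2 \<le> C * N \<and> (norm (Qp - cross3 P (Phi l - Phi 0)))^2 \<le> C * N)"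

lemma efin_ex: "edge l Phi t \<Longrightarrow> \<exists>C. efin l Phi t C"
  unfolding efin_def using edge.edge_final by blast

theorem lemma3p5:
  fixes nV nE :: nat and src tgt :: "nat \<Rightarrow> nat" and Vpos :: "nat \<Rightarrow> real^3"
    and ell :: "nat \<Rightarrow> real" and Phi :: "nat \<Rightarrow> real \<Rightarrow> real^3"
    and Q :: "nat \<Rightarrow> real \<Rightarrow> real^3^3" and H :: "nat \<Rightarrow> real^3^3"
  assumes geom: "stent_geometry nV nE src tgt Vpos ell Phi Q H"
    and straight_indep: "\<And>c :: nat \<Rightarrow> real.
       (\<forall>j<nV. (\<Sum>i | i < nE \<and> tgt i = j \<and> straight_edge ell Phi i. c i *\<^sub>R tangent (Phi i) (ell i) 0)
              - (\<Sum>i | i < nE \<and> src i = j \<and> straight_edge ell Phi i. c i *\<^sub>R tangent (Phi i) (ell i) 0) = 0)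
       \<Longrightarrow> (\<forall>i<nE. straight_edge ell Phi i \<longrightarrow> c i = 0)"
  shows "\<exists>ca > 0. \<forall>q p :: nat \<Rightarrow> real \<Rightarrow> real^3. \<forall>Pp Pm Qp Qm :: nat \<Rightarrow> real^3. \<forall>\<alpha> \<beta> :: real^3.
           (\<forall>i<nE. L2_on (ell i) (q i) \<and> L2_on (ell i) (p i)) \<longrightarrow>
           (\<forall>v dv w dw :: nat \<Rightarrow> real \<Rightarrow> real^3. \<forall>V W :: nat \<Rightarrow> real^3.
              (\<forall>i<nE. H1_on (ell i) (v i) (dv i) \<and> H1_on (ell i) (w i) (dw i)) \<longrightarrow>
              b_form nV nE src tgt ell Phi q p Pp Pm Qp Qm \<alpha> \<beta> v dv w dw V W = 0) \<longrightarrow>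
           a_form nE ell Q H q q \<ge> ca * normV_sq nE ell q p Pp Pm Qp Qm \<alpha> \<beta>"
proof -
  have nE0: "0 < nE" using geom by (simp add: stent_geometry_def)
  have sv: "src i < nV" and tv: "tgt i < nV" if "i < nE" for i
    using geom that by (simp_all add: stent_geometry_def)
  have lpos: "0 < ell i" and sm: "smooth_on_interval (ell i) (Phi i)"
    and nt: "\<forall>s\<in>{0..ell i}. norm (tangent (Phi i) (ell i) s) = 1"
    and P0: "Phi i 0 = Vpos (src i)" and Pl: "Phi i (ell i) = Vpos (tgt i)"
    and Qc: "continuous_on {0..ell i} (Q i)" and Qo: "\<forall>s\<in>{0..ell i}. orthogonal_matrix (Q i s)"
    and Hd: "pos_diag (H i)" if "i < nE" for i
    using geom that unfolding stent_geometry_def by blast+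
  define T where "T i = tangent (Phi i) (ell i)" for i
  have E: "edge (ell i) (Phi i) (T i)" if "i < nE" for i
    unfolding T_def using edge_of_smooth[OF lpos[OF that] sm[OF that]] nt[OF that] by blast
  have "\<exists>C. i < nE \<longrightarrow> efin (ell i) (Phi i) (T i) C" for i
    using efin_ex[OF E] by blast
  then obtain Ce where Ce: "\<And>i. i < nE \<Longrightarrow> efin (ell i) (Phi i) (T i) (Ce i)"
    by metis
  have Ce0: "0 < Ce i" if "i < nE" for i using Ce[OF that] by (simp add: efin_def)
  define S where "S = {i. i < nE \<and> straight_edge ell Phi i}"
  define f where "f i j = (if tgt i = j then T i 0 else 0) - (if src i = j then T i 0 else 0)" for i j
  have finS: "finite S" by (simp add: S_def)
  have Ssub: "S \<subseteq> {..<nE}" by (auto simp: S_def)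
  have sumf: "(\<Sum>i\<in>S. c i *\<^sub>R f i j) =
      (\<Sum>i | i < nE \<and> tgt i = j \<and> straight_edge ell Phi i. c i *\<^sub>R tangent (Phi i) (ell i) 0)
      - (\<Sum>i | i < nE \<and> src i = j \<and> straight_edge ell Phi i. c i *\<^sub>R tangent (Phi i) (ell i) 0)" for c j
  proof -
    have "(\<Sum>i\<in>S. c i *\<^sub>R f i j) = (\<Sum>i\<in>S. if tgt i = j then c i *\<^sub>R T i 0 else 0) - (\<Sum>i\<in>S. if src i = j then c i *\<^sub>R T i 0 else 0)"
      by (simp add: f_def scaleR_diff_right sum_subtractf if_distrib[of "\<lambda>x. c _ *\<^sub>R x"] cong: if_cong)
    also have "(\<Sum>i\<in>S. if tgt i = j then c i *\<^sub>R T i 0 else 0) = (\<Sum>i\<in>{i\<in>S. tgt i = j}. c i *\<^sub>R T i 0)"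
      by (rule sum.inter_filter[OF finS, symmetric])
    also have "(\<Sum>i\<in>S. if src i = j then c i *\<^sub>R T i 0 else 0) = (\<Sum>i\<in>{i\<in>S. src i = j}. c i *\<^sub>R T i 0)"
      by (rule sum.inter_filter[OF finS, symmetric])
    also have "{i\<in>S. tgt i = j} = {i. i < nE \<and> tgt i = j \<and> straight_edge ell Phi i}" by (auto simp: S_def)
    also have "{i\<in>S. src i = j} = {i. i < nE \<and> src i = j \<and> straight_edge ell Phi i}" by (auto simp: S_def)
    finally show ?thesis by (simp add: T_def)
  qed
  obtain KL where KL0: "KL > 0" and KL: "\<And>c i. i \<in> S \<Longrightarrow> \<bar>c i\<bar> \<le> KL * (\<Sum>j\<in>{..<nV}. norm (\<Sum>i\<in>S. c i *\<^sub>R f i j))"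
  proof -
    have "\<exists>K>0. \<forall>c. \<forall>i\<in>S. \<bar>c i\<bar> \<le> K * (\<Sum>j\<in>{..<nV}. norm (\<Sum>i\<in>S. c i *\<^sub>R f i j))"
    proof (rule LA[OF finS finite_lessThan])
      fix c :: "nat \<Rightarrow> real"
      assume "\<forall>j\<in>{..<nV}. (\<Sum>i\<in>S. c i *\<^sub>R f i j) = 0"
      then have "\<forall>j<nV. (\<Sum>i | i < nE \<and> tgt i = j \<and> straight_edge ell Phi i. c i *\<^sub>R tangent (Phi i) (ell i) 0)
              - (\<Sum>i | i < nE \<and> src i = j \<and> straight_edge ell Phi i. c i *\<^sub>R tangent (Phi i) (ell i) 0) = 0"
        by (simp add: sumf)
      from straight_indep[OF this] show "\<forall>i\<in>S. c i = 0" by (simp add: S_def)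
    qed
    then show ?thesis using that by blast
  qed
  define lam where "lam = 1 / (1 + (\<Sum>i<nE. \<Sum>a\<in>UNIV. H i $ a $ a))"
  have Hpos: "0 < H i $ a $ a" if "i < nE" for i a using Hd[OF that] by (simp add: pos_diag_def)
  have Hsum0: "0 \<le> (\<Sum>i<nE. \<Sum>a\<in>UNIV. H i $ a $ a)"
    using Hpos by (intro sum_nonneg) (auto intro: less_imp_le)
  have lam0: "0 < lam" using Hsum0 by (simp add: lam_def)
  have lamH: "lam * H i $ a $ a \<le> 1" if "i < nE" for i a
  proof -
    have "H i $ a $ a \<le> (\<Sum>a\<in>UNIV. H i $ a $ a)"
      using Hpos[OF that] by (intro member_le_sum) (auto intro: less_imp_le)
    also have "\<dots> \<le> (\<Sum>i<nE. \<Sum>a\<in>UNIV. H i $ a $ a)"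
    proof (rule member_le_sum[of i "{..<nE}" "\<lambda>i. \<Sum>a\<in>UNIV. H i $ a $ a"])
      fix x assume "x \<in> {..<nE} - {i}"
      then have "x < nE" by simp
      then show "0 \<le> (\<Sum>a\<in>UNIV. H x $ a $ a)" using Hpos by (intro sum_nonneg) (simp add: less_imp_le)
    qed (use that in auto)
    finally have "H i $ a $ a \<le> 1 + (\<Sum>i<nE. \<Sum>a\<in>UNIV. H i $ a $ a)" by simp
    then show ?thesis using Hsum0 by (simp add: lam_def field_simps)
  qed
  define Cm where "Cm = (\<Sum>i<nE. Ce i)"
  define A where "A = KL * 2 * real nV * real nE + 1"
  define Ctot where "Ctot = 1 + (\<Sum>k<nE. (ell k + 2) * A^2 * Cm + 2 * Cm)"
  have Cm0: "0 < Cm" unfolding Cm_def using Ce0 nE0 by (intro sum_pos) auto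
  have CeCm: "Ce i \<le> Cm" if "i < nE" for i
    unfolding Cm_def using that Ce0 by (intro member_le_sum) (auto intro: less_imp_le)
  have A1: "1 \<le> A" using KL0 by (simp add: A_def)
  have Ctot0: "0 < Ctot"
  proof -
    have "0 \<le> (\<Sum>k<nE. (ell k + 2) * A^2 * Cm + 2 * Cm)"
    proof (intro sum_nonneg)
      fix k assume "k \<in> {..<nE}"
      then have "0 \<le> ell k + 2" using lpos[of k] by simp
      moreover have "0 \<le> A^2" by simp
      ultimately show "0 \<le> (ell k + 2) * A^2 * Cm + 2 * Cm" using Cm0 by simp
    qed
    then show ?thesis by (simp add: Ctot_def)
  qed
  show ?thesis
  proof (intro exI[of _ "lam / Ctot"] conjI allI impI)
    show "0 < lam / Ctot" using lam0 Ctot0 by simp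
    fix q p :: "nat \<Rightarrow> real \<Rightarrow> real^3" and Pp Pm Qp Qm :: "nat \<Rightarrow> real^3" and \<alpha> \<beta> :: "real^3"
    assume L2: "\<forall>i<nE. L2_on (ell i) (q i) \<and> L2_on (ell i) (p i)"
    assume KB: "\<forall>v dv w dw :: nat \<Rightarrow> real \<Rightarrow> real^3. \<forall>V W :: nat \<Rightarrow> real^3.
              (\<forall>i<nE. H1_on (ell i) (v i) (dv i) \<and> H1_on (ell i) (w i) (dw i)) \<longrightarrow>
              b_form nV nE src tgt ell Phi q p Pp Pm Qp Qm \<alpha> \<beta> v dv w dw V W = 0"
    have L2q: "L2_on (ell i) (q i)" and L2p: "L2_on (ell i) (p i)" if "i < nE" for i
      using L2 that by auto
    have KEt: "edgeF (ell k) (T k) (p k) (q k) (Pp k) (Pm k) (Qp k) (Qm k) \<alpha> \<beta> v0 dv0 w0 dw0 = 0"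
      if k: "k < nE" and hv: "H1_on (ell k) v0 dv0" and hw: "H1_on (ell k) w0 dw0" for k v0 dv0 w0 dw0
    proof -
      have "b_form nV nE src tgt ell Phi q p Pp Pm Qp Qm \<alpha> \<beta>
          (\<lambda>i. if i = k then v0 else (\<lambda>s. 0)) (\<lambda>i. if i = k then dv0 else (\<lambda>s. 0))
          (\<lambda>i. if i = k then w0 else (\<lambda>s. 0)) (\<lambda>i. if i = k then dw0 else (\<lambda>s. 0)) (\<lambda>j. 0) (\<lambda>j. 0) = 0"
        by (rule KB[rule_format]) (auto simp: hv hw H1_zero)
      then show ?thesis using b_edge[OF k] by (simp add: edgeF_def T_def)
    qed
    have KE: "kedge (ell k) (Phi k) (T k) (p k) (q k) (Pp k) (Pm k) (Qp k) (Qm k) \<alpha> \<beta>" if k: "k < nE" for k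
      unfolding kedge_def kedge_axioms_def using E[OF k] L2p[OF k] L2q[OF k] KEt[OF k] by blast
    have VP: "Aplus nE tgt Pp j - Aminus nE src Pm j = 0" if j: "j < nV" for j
    proof (rule inner_all_zero)
      fix e
      have "b_form nV nE src tgt ell Phi q p Pp Pm Qp Qm \<alpha> \<beta>
          (\<lambda>i s. 0) (\<lambda>i s. 0) (\<lambda>i s. 0) (\<lambda>i s. 0) (\<lambda>j'. if j' = j then e else 0) (\<lambda>j. 0) = 0"
        by (rule KB[rule_format]) (simp add: H1_zero)
      then show "(Aplus nE tgt Pp j - Aminus nE src Pm j) \<bullet> e = 0" using b_vertexV[OF j] by simp
    qed
    have VQ: "Aplus nE tgt Qp j - Aminus nE src Qm j = 0" if j: "j < nV" for j
    proof (rule inner_all_zero)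
      fix e
      have "b_form nV nE src tgt ell Phi q p Pp Pm Qp Qm \<alpha> \<beta>
          (\<lambda>i s. 0) (\<lambda>i s. 0) (\<lambda>i s. 0) (\<lambda>i s. 0) (\<lambda>j. 0) (\<lambda>j'. if j' = j then e else 0) = 0"
        by (rule KB[rule_format]) (simp add: H1_zero)
      then show "(Aplus nE tgt Qp j - Aminus nE src Qm j) \<bullet> e = 0" using b_vertexW[OF j] by simp
    qed
    have AmAp: "Aminus nE src X j = Aplus nE src X j" for X j by (simp add: Aplus_def Aminus_def)
    have sumV: "(\<Sum>j<nV. Aplus nE tgt X j - Aminus nE src Y j) = (\<Sum>i<nE. X i - Y i)" for X Y
      by (simp add: sum_subtractf AmAp sum_vertex[of nE tgt nV, OF tv] sum_vertex[of nE src nV, OF sv])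
    have ell_sum: "0 < (\<Sum>i<nE. ell i)" using nE0 lpos by (intro sum_pos) auto
    have E1: "Pp k - Pm k + ell k *\<^sub>R \<alpha> = 0" if "k < nE" for k using kedge.E1[OF KE[OF that]] .
    have a0: "\<alpha> = 0"
    proof -
      have "0 = (\<Sum>j<nV. Aplus nE tgt Pp j - Aminus nE src Pm j)" using VP by simp
      also have "\<dots> = (\<Sum>i<nE. Pp i - Pm i)" by (rule sumV)
      also have "\<dots> = (\<Sum>i<nE. - (ell i *\<^sub>R \<alpha>))"
        using E1 by (intro sum.cong refl) (simp add: eq_neg_iff_add_eq_0 algebra_simps)
      also have "\<dots> = - ((\<Sum>i<nE. ell i) *\<^sub>R \<alpha>)" by (simp add: sum_negf scaleR_sum_left)
      finally show ?thesis using ell_sum by simp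
    qed
    have PP: "Pm k = Pp k" if "k < nE" for k using E1[OF that] a0 by (simp add: algebra_simps)
    have E5: "Qp k - Qm k = cross3 (Pp k) (Phi k (ell k) - Phi k 0) - ell k *\<^sub>R \<beta>" if "k < nE" for k
      using kedge.E5[OF KE[OF that] a0 PP[OF that]] .
    have AmPP: "Aminus nE src Pm j = Aminus nE src Pp j" for j
      unfolding Aminus_def using PP by (intro sum.cong refl) auto
    have ApPP: "Aplus nE src Pm j = Aplus nE src Pp j" for j using AmPP[of j] by (simp add: AmAp)
    have b0: "\<beta> = 0"
    proof -
      have c0: "(\<Sum>k<nE. cross3 (Pp k) (Phi k (ell k) - Phi k 0)) = 0"
      proof -
        have "(\<Sum>k<nE. cross3 (Pp k) (Phi k (ell k) - Phi k 0))
            = (\<Sum>k<nE. cross3 (Pp k) (Vpos (tgt k))) - (\<Sum>k<nE. cross3 (Pp k) (Vpos (src k)))"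
          by (simp add: sum_subtractf[symmetric] Pl P0 Cross3.right_diff_distrib)
        also have "(\<Sum>k<nE. cross3 (Pp k) (Vpos (tgt k))) = (\<Sum>j<nV. cross3 (Aplus nE tgt Pp j) (Vpos j))"
          by (rule cross_vertex[symmetric]) (rule tv)
        also have "(\<Sum>k<nE. cross3 (Pp k) (Vpos (src k))) = (\<Sum>j<nV. cross3 (Aplus nE src Pp j) (Vpos j))"
          by (rule cross_vertex[symmetric]) (rule sv)
        also have "(\<Sum>j<nV. cross3 (Aplus nE tgt Pp j) (Vpos j)) - (\<Sum>j<nV. cross3 (Aplus nE src Pp j) (Vpos j))
            = (\<Sum>j<nV. cross3 (Aplus nE tgt Pp j - Aminus nE src Pm j) (Vpos j))"
          by (simp add: sum_subtractf[symmetric] ApPP AmAp Cross3.left_diff_distrib)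
        also have "\<dots> = 0" using VP by simp
        finally show ?thesis .
      qed
      have "0 = (\<Sum>j<nV. Aplus nE tgt Qp j - Aminus nE src Qm j)" using VQ by simp
      also have "\<dots> = (\<Sum>i<nE. Qp i - Qm i)" by (rule sumV)
      also have "\<dots> = (\<Sum>k<nE. cross3 (Pp k) (Phi k (ell k) - Phi k 0)) - (\<Sum>k<nE. ell k *\<^sub>R \<beta>)"
        using E5 by (simp add: sum_subtractf)
      also have "\<dots> = - ((\<Sum>i<nE. ell i) *\<^sub>R \<beta>)" using c0 by (simp add: scaleR_sum_left)
      finally show ?thesis using ell_sum by simp
    qed
    define N where "N k = integral {0..ell k} (\<lambda>s. norm (q k s)^2)" for k
    have N0: "0 \<le> N k" if "k < nE" for k
      unfolding N_def by (rule integral_nonneg[OF L2_sq_integrable[OF L2q[OF that]]]) simp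
    define Lf where "Lf k = Lfun (ell k) (T k) (Pp k)" for k
    have bounds: "Lf k ^ 2 \<le> Ce k * N k \<and> norm (Qp k) ^ 2 \<le> Ce k * N k \<and> norm (Qm k) ^ 2 \<le> Ce k * N k"
      if k: "k < nE" for k
    proof -
      have Qm: "Qm k = Qp k - cross3 (Pp k) (Phi k (ell k) - Phi k 0)"
        using E5[OF k] b0 by (simp add: algebra_simps)
      have hyp: "\<forall>a b. 0 \<le> a \<longrightarrow> a < b \<longrightarrow> b \<le> ell k \<longrightarrow>
          (b - a) * Lfun (ell k) (T k) (Pp k) \<le> norm (Qp k - cross3 (Pp k) (Phi k (ell k) - Phi k b)) \<longrightarrow>
          (b - a) * (norm (Qp k - cross3 (Pp k) (Phi k (ell k) - Phi k b)) - (b - a) * Lfun (ell k) (T k) (Pp k))^2 \<le> N k"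
        using kedge.E6[OF KE[OF k] a0 PP[OF k] b0] by (simp add: N_def)
      have ef: "\<forall>P Qp N. (\<forall>a b. 0 \<le> a \<longrightarrow> a < b \<longrightarrow> b \<le> ell k \<longrightarrow>
        (b - a) * Lfun (ell k) (T k) P \<le> norm (Qp - cross3 P (Phi k (ell k) - Phi k b)) \<longrightarrow>
        (b - a) * (norm (Qp - cross3 P (Phi k (ell k) - Phi k b)) - (b - a) * Lfun (ell k) (T k) P)^2 \<le> N)
        \<longrightarrow> (Lfun (ell k) (T k) P)^2 \<le> Ce k * N \<and> (norm Qp)^2 \<le> Ce k * N \<and> (norm (Qp - cross3 P (Phi k (ell k) - Phi k 0)))^2 \<le> Ce k * N"
        using Ce[OF k] by (simp add: efin_def)
      from ef[THEN spec, THEN spec, THEN spec, THEN mp, OF hyp] show ?thesis by (simp add: Lf_def Qm)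
    qed
    define NN where "NN = (\<Sum>k<nE. N k)"
    have NN0: "0 \<le> NN" unfolding NN_def using N0 by (intro sum_nonneg) auto
    have NkNN: "N k \<le> NN" if "k < nE" for k
      unfolding NN_def using that N0 by (intro member_le_sum) auto
    define R where "R = sqrt (Cm * NN)"
    have R0: "0 \<le> R" using Cm0 NN0 by (simp add: R_def)
    have R2: "R^2 = Cm * NN" using Cm0 NN0 by (simp add: R_def)
    have CN: "Ce k * N k \<le> Cm * NN" if "k < nE" for k
      using CeCm[OF that] NkNN[OF that] N0[OF that] Ce0[OF that] by (intro mult_mono) auto
    have toR: "x \<le> R" if "x^2 \<le> Ce k * N k" "k < nE" for x k
      unfolding R_def by (rule real_le_rsqrt) (use that(1) CN[OF that(2)] in linarith)
    have LfR: "Lf k \<le> R" if "k < nE" for k using toR bounds that by blast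
    have Lf0: "0 \<le> Lf k" for k by (simp add: Lf_def Lfun_def)
    define c where "c i = Pp i \<bullet> T i 0" for i
    define g where "g i = (if i \<in> S then c i *\<^sub>R T i 0 else 0)" for i
    define e where "e i = Pp i - g i" for i
    have T0: "norm (T i 0) = 1" if "i < nE" for i using nt[OF that] lpos[OF that] by (simp add: T_def)
    have strS: "i \<in> S \<longleftrightarrow> (\<exists>c. \<forall>s\<in>{0..ell i}. T i s = c)" if "i < nE" for i
      using that by (simp add: S_def straight_edge_def T_def)
    have ne: "norm (e i) = Lf i" if i: "i < nE" for i
    proof (cases "i \<in> S")
      case True
      then have "Lf i = norm (cross3 (Pp i) (T i 0))" using strS[OF i] by (simp add: Lf_def Lfun_def)
      moreover have "e i = Pp i - (Pp i \<bullet> T i 0) *\<^sub>R T i 0" using True by (simp add: e_def g_def c_def)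
      ultimately show ?thesis using perp_norm[OF T0[OF i]] by simp
    next
      case False
      then have "Lf i = norm (Pp i)" using strS[OF i] unfolding Lf_def Lfun_def by (simp only: if_False)
      moreover have "e i = Pp i" using False by (simp add: e_def g_def)
      ultimately show ?thesis by simp
    qed
    have gsum: "(\<Sum>i\<in>S. c i *\<^sub>R f i j) = Aplus nE tgt g j - Aminus nE src g j" for j
    proof -
      have SI: "{..<nE} \<inter> S = S" using Ssub by auto
      have A1: "Aplus nE tgt g j = (\<Sum>i\<in>S. if tgt i = j then c i *\<^sub>R T i 0 else 0)"
      proof -
        have "Aplus nE tgt g j = (\<Sum>i<nE. if i \<in> S then (if tgt i = j then c i *\<^sub>R T i 0 else 0) else 0)"
          unfolding Aplus_alt by (intro sum.cong refl) (auto simp: g_def)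
        also have "\<dots> = (\<Sum>i\<in>{..<nE} \<inter> S. if tgt i = j then c i *\<^sub>R T i 0 else 0)"
          by (rule sum.inter_restrict[symmetric]) simp
        finally show ?thesis using SI by simp
      qed
      have A2: "Aminus nE src g j = (\<Sum>i\<in>S. if src i = j then c i *\<^sub>R T i 0 else 0)"
      proof -
        have "Aminus nE src g j = (\<Sum>i<nE. if i \<in> S then (if src i = j then c i *\<^sub>R T i 0 else 0) else 0)"
          unfolding Aminus_alt by (intro sum.cong refl) (auto simp: g_def)
        also have "\<dots> = (\<Sum>i\<in>{..<nE} \<inter> S. if src i = j then c i *\<^sub>R T i 0 else 0)"
          by (rule sum.inter_restrict[symmetric]) simp
        finally show ?thesis using SI by simp
      qed
      show ?thesis unfolding A1 A2
        by (simp add: f_def scaleR_diff_right sum_subtractf if_distrib[of "\<lambda>x. c _ *\<^sub>R x"] cong: if_cong)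
    qed
    have vert: "(\<Sum>i\<in>S. c i *\<^sub>R f i j) = - (Aplus nE tgt e j - Aminus nE src e j)" if j: "j < nV" for j
    proof -
      have Pe: "Pp = (\<lambda>i. e i + g i)" by (simp add: e_def fun_eq_iff)
      have "0 = Aplus nE tgt Pp j - Aminus nE src Pp j" using VP[OF j] AmPP by simp
      also have "\<dots> = (Aplus nE tgt e j - Aminus nE src e j) + (Aplus nE tgt g j - Aminus nE src g j)"
        by (subst (1 2) Pe) (simp add: Aplus_add Aminus_add)
      finally have h: "(Aplus nE tgt e j - Aminus nE src e j) + (Aplus nE tgt g j - Aminus nE src g j) = 0" by simp
      have "Aplus nE tgt g j - Aminus nE src g j = - (Aplus nE tgt e j - Aminus nE src e j)"
        using h by (metis add.commute eq_neg_iff_add_eq_0)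
      then show ?thesis unfolding gsum .
    qed
    have sumLf: "(\<Sum>i<nE. Lf i) \<le> real nE * R"
      using sum_bounded_above[of "{..<nE}" Lf R] LfR by simp
    have normvert: "norm (\<Sum>i\<in>S. c i *\<^sub>R f i j) \<le> 2 * (real nE * R)" if j: "j < nV" for j
    proof -
      have en: "(\<Sum>i<nE. norm (e i)) = (\<Sum>i<nE. Lf i)" using ne by (intro sum.cong) auto
      have "norm (\<Sum>i\<in>S. c i *\<^sub>R f i j) = norm (Aplus nE tgt e j - Aminus nE src e j)"
        unfolding vert[OF j] by (rule norm_minus_cancel)
      also have "\<dots> \<le> norm (Aplus nE tgt e j) + norm (Aminus nE src e j)" by (rule norm_triangle_ineq4)
      also have "\<dots> \<le> (\<Sum>i<nE. norm (e i)) + (\<Sum>i<nE. norm (e i))"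
        by (intro add_mono Aplus_norm Aminus_norm)
      finally show ?thesis using en sumLf by linarith
    qed
    have cR: "\<bar>c i\<bar> \<le> KL * 2 * real nV * real nE * R" if i: "i \<in> S" for i
    proof -
      have "\<bar>c i\<bar> \<le> KL * (\<Sum>j\<in>{..<nV}. norm (\<Sum>i\<in>S. c i *\<^sub>R f i j))" by (rule KL[OF i])
      also have "(\<Sum>j\<in>{..<nV}. norm (\<Sum>i\<in>S. c i *\<^sub>R f i j)) \<le> real nV * (2 * (real nE * R))"
        using sum_bounded_above[of "{..<nV}" "\<lambda>j. norm (\<Sum>i\<in>S. c i *\<^sub>R f i j)" "2 * (real nE * R)"] normvert by simp
      finally show ?thesis using KL0 by (simp add: mult_left_mono algebra_simps)
    qed
    have PR: "norm (Pp k) \<le> A * R" if k: "k < nE" for k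
    proof -
      have gk: "norm (g k) \<le> KL * 2 * real nV * real nE * R"
      proof (cases "k \<in> S")
        case True then show ?thesis using cR[OF True] T0[OF k] by (simp add: g_def)
      next
        case False then show ?thesis using KL0 R0 by (simp add: g_def)
      qed
      have "norm (Pp k) \<le> norm (e k) + norm (g k)" unfolding e_def by (metis diff_add_cancel norm_triangle_ineq)
      also have "\<dots> \<le> R + KL * 2 * real nV * real nE * R" using ne[OF k] LfR[OF k] gk by simp
      also have "\<dots> = A * R" by (simp add: A_def algebra_simps)
      finally show ?thesis .
    qed
    have P2: "norm (Pp k)^2 \<le> A^2 * (Cm * NN)" if k: "k < nE" for k
    proof -
      have "norm (Pp k)^2 \<le> (A * R)^2" using PR[OF k] by (intro power_mono) auto
      also have "\<dots> = A^2 * (Cm * NN)" by (simp add: power_mult_distrib R2)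
      finally show ?thesis .
    qed
    have nV_le: "normV_sq nE ell q p Pp Pm Qp Qm \<alpha> \<beta> \<le> Ctot * NN"
    proof -
      have tm: "integral {0..ell k} (\<lambda>s. norm (q k s) ^ 2) + integral {0..ell k} (\<lambda>s. norm (p k s) ^ 2)
          + norm (Pp k) ^ 2 + norm (Pm k) ^ 2 + norm (Qp k) ^ 2 + norm (Qm k) ^ 2
          \<le> N k + ((ell k + 2) * A^2 * Cm + 2 * Cm) * NN" if k: "k < nE" for k
      proof -
        have E3: "integral {0..ell k} (\<lambda>s. norm (p k s)^2) = ell k * norm (Pp k)^2"
          using kedge.E3[OF KE[OF k] a0 PP[OF k]] by simp
        have "ell k * norm (Pp k)^2 \<le> ell k * (A^2 * (Cm * NN))"
          using P2[OF k] lpos[OF k] by (intro mult_left_mono) auto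
        moreover have "norm (Qp k)^2 \<le> Cm * NN" "norm (Qm k)^2 \<le> Cm * NN"
          using bounds[OF k] CN[OF k] by linarith+
        ultimately show ?thesis using P2[OF k] PP[OF k] E3
          by (simp add: N_def algebra_simps)
      qed
      have "normV_sq nE ell q p Pp Pm Qp Qm \<alpha> \<beta> \<le> (\<Sum>k<nE. N k + ((ell k + 2) * A^2 * Cm + 2 * Cm) * NN)"
        unfolding normV_sq_def using a0 b0 tm by (simp, intro sum_mono) auto
      also have "\<dots> = NN + (\<Sum>k<nE. (ell k + 2) * A^2 * Cm + 2 * Cm) * NN"
        by (simp only: sum.distrib NN_def sum_distrib_right[symmetric])
      also have "\<dots> = Ctot * NN" by (simp add: Ctot_def algebra_simps)
      finally show ?thesis .
    qed
    have aN: "lam * NN \<le> a_form nE ell Q H q q"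
    proof -
      have "lam * NN = (\<Sum>k<nE. lam * N k)" by (simp add: NN_def sum_distrib_left)
      also have "\<dots> \<le> (\<Sum>k<nE. integral {0..ell k}
          (\<lambda>s. ((Q k s ** matrix_inv (H k) ** transpose (Q k s)) *v q k s) \<bullet> q k s))"
      proof (rule sum_mono)
        fix k assume "k \<in> {..<nE}"
        then have k: "k < nE" by simp
        show "lam * N k \<le> integral {0..ell k} (\<lambda>s. ((Q k s ** matrix_inv (H k) ** transpose (Q k s)) *v q k s) \<bullet> q k s)"
          unfolding N_def
          by (rule a_edge_lower[OF Qc[OF k] _ Hd[OF k] L2q[OF k] lam0 lamH[OF k]]) (use Qo[OF k] in auto)
      qed
      also have "\<dots> = a_form nE ell Q H q q" by (simp add: a_form_def)
      finally show ?thesis .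
    qed
    have "lam / Ctot * normV_sq nE ell q p Pp Pm Qp Qm \<alpha> \<beta> \<le> lam / Ctot * (Ctot * NN)"
      using nV_le lam0 Ctot0 by (intro mult_left_mono) auto
    also have "\<dots> = lam * NN" using Ctot0 by simp
    finally show "a_form nE ell Q H q q \<ge> lam / Ctot * normV_sq nE ell q p Pp Pm Qp Qm \<alpha> \<beta>"
      using aN by linarith
  qed
qed

end
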